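(* Let $d\in\{3,4\}$ and let $g$ satisfy the assumptions listed in the context. Let $\omega_1>0$ and $\mu:(\omega_1,\infty)\to(0,\infty)$ be as in the context, and set $\kappa(\omega):=-\langle g(\mu(\omega)M_\omega W),\Lambda W\rangle$. Then $$\lim_{\omega\to\infty}\frac{\kappa(\omega)}{\{\mu(\omega)M_\omega\}^{p_2}}=-\frac{C_2}{p_2}\langle W^{p_2},\Lambda W\rangle .$$
   Context: Let $2^*=\frac{2d}{d-2}$. Assumptions on $g:\mathbb{C}\to\mathbb{C}$ (independent of $\omega$): (a) restriction to $(0,\infty)$ is real-valued and $C^2$, $g(0)=0$, $g(z)=\frac{z}{|z|}g(|z|)$ for $z\ne0$, $g'(t)t-g(t)\ge0$ for $t>0$; (b) there exist $\max\{\frac{2}{d-2},1\}<p_1<\frac{d+2}{d-2}$, $\max\{\frac{d+2}{d-2}-2,p_1\}<p_2<\frac{d+2}{d-2}$ and $C_1,C_2>0$ with $\limsup_{t\to0}|g'(t)|/t^{p_1-1}\le C_1$, $\lim_{t\to\infty}g'(t)/t^{p_2-1}=C_2$; (c) with $G(t)=\int_0^tg$, there is $C_3>0$ with $G(t)-\frac1{2^*}g(t)t\ge C_3t^{p_2+1}$ for $t\ge0$. For $\omega>0$, $\Phi_\omega$ is a ground state of $-\Delta u+\omega u-|u|^{\frac4{d-2}}u-g(u)=0$ (minimizer of $\mathcal S_\omega(u)=\frac12\|\nabla u\|_2^2+\frac\omega2\|u\|_2^2-\frac1{2^*}\|u\|_{2^*}^{2^*}-\int G(|u|)$ over $u\in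 H^1\setminus\{0\}$ with $\|\nabla u\|_2^2+\omega\|u\|_2^2-\|u\|_{2^*}^{2^*}-\int g(|u|)|u|=0$), chosen to solve the equation and be positive, radial, strictly decreasing in $|x|$; $M_\omega:=\Phi_\omega(0)$. $T_\lambda[v](x):=\lambda^{-1}v(\lambda^{-\frac2{d-2}}x)$, $\widetilde\Phi_\omega:=T_{M_\omega}[\Phi_\omega]$. $W(x)=(1+\frac{|x|^2}{d(d-2)})^{-\frac{d-2}{2}}$, $\Lambda W=\frac{d-2}2W+x\cdot\nabla W$, $V=-\frac{d+2}{d-2}W^{\frac4{d-2}}$, $\langle f,g\rangle=\operatorname{Re}\int f\bar g$. The pair $(\omega_1,\mu)$ is as produced by the following result of the paper: there exists $\omega_1>0$ and, for each $\omega>\omega_1$, $\mu(\omega)>0$ with $\mu(\omega)\to1$ as $\omega\to\infty$, such that with $s(\omega)=\{\mu(\omega)M_\omega\}^{-\frac4{d-2}}\omega$ and $\zeta_\omega=T_{\mu(\omega)}[\widetilde\Phi_\omega]-W$ one has $\langle\{1+(-\Delta+s(\omega))^{-1}V\}\zeta_\omega,V\Lambda W\rangle=0$, $\|\nabla\zeta_\omega\|_{L^2}\to0$ and $\|\zeta_\omega\|_{L^r}\to0$ for all $\frac d{d-2}<r<\infty$. *)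

theory Defs
  imports "HOL-Analysis.Analysis"
begin

definition dimR :: "'n::finite itself \<Rightarrow> real" where
  "dimR _ = real CARD('n)"

definition crit_exp :: "'n::finite itself \<Rightarrow> real" where
  "crit_exp n = 2 * dimR n / (dimR n - 2)"

definition partial :: "'n::finite \<Rightarrow> (real^'n \<Rightarrow> real) \<Rightarrow> real^'n \<Rightarrow> real" where
  "partial i f x = frechet_derivative f (at x) (axis i 1)"

fun iter_partial :: "'n::finite list \<Rightarrow> (real^'n \<Rightarrow> real) \<Rightarrow> real^'n \<Rightarrow> real" where
  "iter_partial [] f = f"
| "iter_partial (i # is) f = partial i (iter_partial is f)"

definition smooth_fun :: "(real^'n::finite \<Rightarrow> real) \<Rightarrow> bool" where
  "smooth_fun f \<longleftrightarrow> (\<forall>is. continuous_on UNIV (iter_partial is f)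
                        \<and> (\<forall>x. iter_partial is f differentiable (at x)))"

definition test_fun :: "(real^'n::finite \<Rightarrow> real) \<Rightarrow> bool" where
  "test_fun \<phi> \<longleftrightarrow> smooth_fun \<phi> \<and> (\<exists>R. \<forall>x. R < norm x \<longrightarrow> \<phi> x = 0)"

definition weak_grad :: "(real^'n::finite \<Rightarrow> complex) \<Rightarrow> (real^'n \<Rightarrow> complex^'n) \<Rightarrow> bool" where
  "weak_grad u Du \<longleftrightarrow> u \<in> borel_measurable lborel \<and> Du \<in> borel_measurable lborel \<and>
     (\<forall>\<phi> i. test_fun \<phi> \<longrightarrow>
        integrable lborel (\<lambda>x. u x * of_real (partial i \<phi> x)) \<and>
        integrable lborel (\<lambda>x. Du x $ i * of_real (\<phi> x)) \<and>
        (\<integral>x. u x * of_real (partial i \<phi> x) \<partial>lborel) = - (\<integral>x. Du x $ i * of_real (\<phi> x) \<partial>lborel))"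

definition has_weak_grad :: "(real^'n::finite \<Rightarrow> complex) \<Rightarrow> bool" where
  "has_weak_grad u \<longleftrightarrow> (\<exists>Du. weak_grad u Du)"

definition grad :: "(real^'n::finite \<Rightarrow> complex) \<Rightarrow> real^'n \<Rightarrow> complex^'n" where
  "grad u = (SOME Du. weak_grad u Du)"

text \<open>L^p norms (p>0), valued in ennreal so that they are infinite outside L^p.\<close>
definition Lp_norm_pow :: "real \<Rightarrow> (real^'n::finite \<Rightarrow> complex) \<Rightarrow> ennreal" where
  "Lp_norm_pow p u = (\<integral>\<^sup>+ x. ennreal (cmod (u x) powr p) \<partial>lborel)"

definition in_Lp :: "real \<Rightarrow> (real^'n::finite \<Rightarrow> complex) \<Rightarrow> bool" where
  "in_Lp p u \<longleftrightarrow> u \<in> borel_measurable lborel \<and> integrable lborel (\<lambda>x. cmod (u x) powr p)"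

text \<open>\<open>\<parallel>\<nabla>u\<parallel>_2^2\<close> as an ennreal (infinite unless |\<nabla>u| \<in> L^2).\<close>
definition grad_norm2_enn :: "(real^'n::finite \<Rightarrow> complex) \<Rightarrow> ennreal" where
  "grad_norm2_enn u = (\<integral>\<^sup>+ x. ennreal (\<Sum>i\<in>UNIV. (cmod (grad u x $ i))\<^sup>2) \<partial>lborel)"

definition grad_norm2 :: "(real^'n::finite \<Rightarrow> complex) \<Rightarrow> real" where
  "grad_norm2 u = (\<integral>x. (\<Sum>i\<in>UNIV. (cmod (grad u x $ i))\<^sup>2) \<partial>lborel)"

definition H1 :: "(real^'n::finite \<Rightarrow> complex) set" where
  "H1 = {u. in_Lp 2 u \<and> has_weak_grad u \<and> grad_norm2_enn u < \<infinity>}"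

definition rinner :: "(real^'n::finite \<Rightarrow> complex) \<Rightarrow> (real^'n \<Rightarrow> complex) \<Rightarrow> real" where
  "rinner f g = Re (\<integral>x. f x * cnj (g x) \<partial>lborel)"

definition g_real :: "(complex \<Rightarrow> complex) \<Rightarrow> real \<Rightarrow> real" where
  "g_real g t = Re (g (complex_of_real t))"

definition G_prim :: "(complex \<Rightarrow> complex) \<Rightarrow> real \<Rightarrow> real" where
  "G_prim g t = integral {0..t} (g_real g)"

definition assumptions_g ::
  "'n::finite itself \<Rightarrow> (complex \<Rightarrow> complex) \<Rightarrow> real \<Rightarrow> real \<Rightarrow> real \<Rightarrow> real \<Rightarrow> real \<Rightarrow> bool" where
  "assumptions_g n g p1 p2 C1 C2 C3 \<longleftrightarrow>
    (let d = dimR n; gr = g_real g; g' = deriv gr in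
    \<comment> \<open>(a)\<close>
    (\<forall>t>0. g (complex_of_real t) \<in> \<real>) \<and>
    (\<forall>t>0. gr differentiable (at t) \<and> deriv gr differentiable (at t)) \<and>
    continuous_on {0<..} (deriv (deriv gr)) \<and>
    g 0 = 0 \<and>
    (\<forall>z. z \<noteq> 0 \<longrightarrow> g z = z / complex_of_real (cmod z) * g (complex_of_real (cmod z))) \<and>
    (\<forall>t>0. g' t * t - gr t \<ge> 0) \<and>
    \<comment> \<open>(b)\<close>
    max (2 / (d - 2)) 1 < p1 \<and> p1 < (d + 2) / (d - 2) \<and>
    max ((d + 2) / (d - 2) - 2) p1 < p2 \<and> p2 < (d + 2) / (d - 2) \<and>
    C1 > 0 \<and> C2 > 0 \<and>
    Limsup (at_right 0) (\<lambda>t. ereal (\<bar>g' t\<bar> / t powr (p1 - 1))) \<le> ereal C1 \<and>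
    ((\<lambda>t. g' t / t powr (p2 - 1)) \<longlongrightarrow> C2) at_top \<and>
    \<comment> \<open>(c)\<close>
    C3 > 0 \<and>
    (\<forall>t\<ge>0. G_prim g t - gr t * t / crit_exp n \<ge> C3 * t powr (p2 + 1)))"

definition action :: "'n::finite itself \<Rightarrow> (complex \<Rightarrow> complex) \<Rightarrow> real \<Rightarrow> (real^'n \<Rightarrow> complex) \<Rightarrow> real" where
  "action n g \<omega> u = grad_norm2 u / 2 + \<omega> / 2 * (\<integral>x. (cmod (u x))\<^sup>2 \<partial>lborel)
     - (\<integral>x. cmod (u x) powr crit_exp n \<partial>lborel) / crit_exp n
     - (\<integral>x. G_prim g (cmod (u x)) \<partial>lborel)"

definition nehari :: "'n::finite itself \<Rightarrow> (complex \<Rightarrow> complex) \<Rightarrow> real \<Rightarrow> (real^'n \<Rightarrow> complex) \<Rightarrow> real" where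
  "nehari n g \<omega> u = grad_norm2 u + \<omega> * (\<integral>x. (cmod (u x))\<^sup>2 \<partial>lborel)
     - (\<integral>x. cmod (u x) powr crit_exp n \<partial>lborel)
     - (\<integral>x. g_real g (cmod (u x)) * cmod (u x) \<partial>lborel)"

definition nehari_set :: "'n::finite itself \<Rightarrow> (complex \<Rightarrow> complex) \<Rightarrow> real \<Rightarrow> (real^'n \<Rightarrow> complex) set" where
  "nehari_set n g \<omega> = {u \<in> H1. \<not> (AE x in lborel. u x = 0) \<and> nehari n g \<omega> u = 0}"

definition ground_state :: "'n::finite itself \<Rightarrow> (complex \<Rightarrow> complex) \<Rightarrow> real \<Rightarrow> (real^'n \<Rightarrow> complex) \<Rightarrow> bool" where
  "ground_state n g \<omega> u \<longleftrightarrow> u \<in> nehari_set n g \<omega> \<and>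
     (\<forall>v \<in> nehari_set n g \<omega>. action n g \<omega> u \<le> action n g \<omega> v)"

definition weak_solution :: "'n::finite itself \<Rightarrow> (complex \<Rightarrow> complex) \<Rightarrow> real \<Rightarrow> (real^'n \<Rightarrow> complex) \<Rightarrow> bool" where
  "weak_solution n g \<omega> u \<longleftrightarrow> u \<in> H1 \<and>
     (\<forall>\<phi>. test_fun \<phi> \<longrightarrow>
       (\<integral>x. (\<Sum>i\<in>UNIV. grad u x $ i * of_real (partial i \<phi> x))
            + of_real \<omega> * u x * of_real (\<phi> x)
            - of_real (cmod (u x) powr (4 / (dimR n - 2))) * u x * of_real (\<phi> x)
            - g (u x) * of_real (\<phi> x) \<partial>lborel) = 0)"

definition W :: "'n::finite itself \<Rightarrow> real^'n \<Rightarrow> real" where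
  "W n x = (1 + (norm x)\<^sup>2 / (dimR n * (dimR n - 2))) powr (- (dimR n - 2) / 2)"

definition LambdaW :: "'n::finite itself \<Rightarrow> real^'n \<Rightarrow> real" where
  "LambdaW n x = (dimR n - 2) / 2 * W n x + frechet_derivative (W n) (at x) x"

definition Vpot :: "'n::finite itself \<Rightarrow> real^'n \<Rightarrow> real" where
  "Vpot n x = - (dimR n + 2) / (dimR n - 2) * W n x powr (4 / (dimR n - 2))"

definition Tscale :: "'n::finite itself \<Rightarrow> real \<Rightarrow> (real^'n \<Rightarrow> complex) \<Rightarrow> real^'n \<Rightarrow> complex" where
  "Tscale n lam v x = v (lam powr (- 2 / (dimR n - 2)) *\<^sub>R x) / of_real lam"

text \<open>(-\<Delta>+s)^{-1}f: an H^1 weak solution u of -\<Delta>u + s u = f (unique up to null sets).\<close>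
definition resolvent :: "real \<Rightarrow> (real^'n::finite \<Rightarrow> complex) \<Rightarrow> real^'n \<Rightarrow> complex" where
  "resolvent s f = (SOME u. u \<in> H1 \<and>
     (\<forall>\<phi>. test_fun \<phi> \<longrightarrow>
       (\<integral>x. (\<Sum>i\<in>UNIV. grad u x $ i * of_real (partial i \<phi> x)) + of_real s * u x * of_real (\<phi> x) \<partial>lborel)
       = (\<integral>x. f x * of_real (\<phi> x) \<partial>lborel)))"


definition peak :: "(real^'n::finite \<Rightarrow> complex) \<Rightarrow> real" where
  "peak u = Re (u 0)"

definition zeta :: "'n::finite itself \<Rightarrow> (real \<Rightarrow> real^'n \<Rightarrow> complex) \<Rightarrow> (real \<Rightarrow> real) \<Rightarrow> real \<Rightarrow> real^'n \<Rightarrow> complex" where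
  "zeta n \<Phi> \<mu> \<omega> x = Tscale n (\<mu> \<omega>) (Tscale n (peak (\<Phi> \<omega>)) (\<Phi> \<omega>)) x - complex_of_real (W n x)"

definition s_par :: "'n::finite itself \<Rightarrow> (real \<Rightarrow> real^'n \<Rightarrow> complex) \<Rightarrow> (real \<Rightarrow> real) \<Rightarrow> real \<Rightarrow> real" where
  "s_par n \<Phi> \<mu> \<omega> = (\<mu> \<omega> * peak (\<Phi> \<omega>)) powr (- 4 / (dimR n - 2)) * \<omega>"

definition kappa :: "'n::finite itself \<Rightarrow> (complex \<Rightarrow> complex) \<Rightarrow> (real \<Rightarrow> real^'n \<Rightarrow> complex) \<Rightarrow> (real \<Rightarrow> real) \<Rightarrow> real \<Rightarrow> real" where
  "kappa n g \<Phi> \<mu> \<omega> = - rinner (\<lambda>x. g (complex_of_real (\<mu> \<omega> * peak (\<Phi> \<omega>) * W n x)))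
                                (\<lambda>x. complex_of_real (LambdaW n x))"

end

theory Submission
  imports Defs
begin



lemma gr_ratio_mono:
  fixes gr :: "real \<Rightarrow> real"
  assumes dif: "\<And>t. t > 0 \<Longrightarrow> gr differentiable (at t)"
    and mon: "\<And>t. t > 0 \<Longrightarrow> deriv gr t * t - gr t \<ge> 0"
    and st: "0 < s" "s \<le> t"
  shows "gr s / s \<le> gr t / t"
proof (rule DERIV_nonneg_imp_increasing_open[OF st(2)])
  fix x assume x: "s < x" "x < t"
  then have x0: "x > 0" using st by auto
  have D: "DERIV gr x :> deriv gr x" using dif[OF x0] by (simp add: DERIV_deriv_iff_real_differentiable)
  have "DERIV (\<lambda>y. gr y / y) x :> (deriv gr x * x - gr x * 1) / (x * x)"
    by (rule derivative_eq_intros D | use x0 in auto)+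
  then show "\<exists>y. DERIV (\<lambda>y. gr y / y) x :> y \<and> 0 \<le> y"
    using mon[OF x0] x0 by (intro exI[of _ "(deriv gr x * x - gr x * 1) / (x * x)"]) auto
next
  have "continuous_on {s..t} gr"
    using st dif by (intro continuous_at_imp_continuous_on) (auto intro: differentiable_imp_continuous_within)
  then show "continuous_on {s..t} (\<lambda>y. gr y / y)"
    using st by (intro continuous_intros) auto
qed



lemma gr_near0:
  fixes gr :: "real \<Rightarrow> real"
  assumes lims: "Limsup (at_right 0) (\<lambda>t. ereal (\<bar>deriv gr t\<bar> / t powr (p1 - 1))) \<le> ereal C1"
  shows "\<exists>\<delta>>0. \<forall>s. 0 < s \<and> s < \<delta> \<longrightarrow> \<bar>deriv gr s\<bar> \<le> (C1 + 1) * s powr (p1 - 1)"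
proof -
  have "Limsup (at_right 0) (\<lambda>t. ereal (\<bar>deriv gr t\<bar> / t powr (p1 - 1))) < ereal (C1 + 1)"
    by (rule le_less_trans[OF lims]) simp
  from Limsup_lessD[OF this]
  have "\<forall>\<^sub>F t in at_right 0. \<bar>deriv gr t\<bar> / t powr (p1 - 1) < C1 + 1" by simp
  then obtain b where b: "b > 0" "\<And>y. 0 < y \<Longrightarrow> y < b \<Longrightarrow> \<bar>deriv gr y\<bar> / y powr (p1 - 1) < C1 + 1"
    unfolding eventually_at_right_field by auto
  show ?thesis
  proof (intro exI[of _ b] conjI allI impI)
    fix s assume s: "0 < s \<and> s < b"
    then have "\<bar>deriv gr s\<bar> / s powr (p1 - 1) < C1 + 1" using b by auto
    moreover have "s powr (p1 - 1) > 0" using s by auto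
    ultimately show "\<bar>deriv gr s\<bar> \<le> (C1 + 1) * s powr (p1 - 1)"
      by (simp add: divide_less_eq)
  qed (use b in auto)
qed

lemma gr_bounded:
  fixes gr :: "real \<Rightarrow> real"
  assumes dif: "\<And>t. t > 0 \<Longrightarrow> gr differentiable (at t)"
    and near: "\<delta> > 0" "\<And>s. 0 < s \<Longrightarrow> s < \<delta> \<Longrightarrow> \<bar>deriv gr s\<bar> \<le> K * s powr (p1 - 1)"
    and p1: "p1 > 1" and t: "t > 0"
  shows "\<exists>B. \<forall>s\<in>{0<..t}. \<bar>gr s\<bar> \<le> B"
proof -
  define a where "a = min (\<delta>/2) t"
  have a: "0 < a" "a < \<delta>" "a \<le> t" using near t by (auto simp: a_def)
  have cont: "continuous_on {x..y} gr" if "0 < x" for x y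
    using that dif by (intro continuous_at_imp_continuous_on) (auto intro: differentiable_imp_continuous_within)
  have "compact (gr ` {a..t})" using cont[OF a(1)] by (intro compact_continuous_image) auto
  then obtain B1 where B1: "\<And>s. s \<in> {a..t} \<Longrightarrow> \<bar>gr s\<bar> \<le> B1"
    by (metis compact_imp_bounded bounded_iff image_eqI real_norm_def)
  have B2: "\<bar>gr s\<bar> \<le> \<bar>gr a\<bar> + a * (\<bar>K\<bar> * \<delta> powr (p1 - 1))" if s: "0 < s" "s < a" for s
  proof -
    obtain l z where z: "s < z" "z < a" "DERIV gr z :> l" "gr a - gr s = (a - s) * l"
      using MVT[OF s(2) cont[OF s(1)]] dif s a by force
    have "l = deriv gr z" using z(3) by (simp add: DERIV_imp_deriv)
    then have "\<bar>l\<bar> \<le> K * z powr (p1 - 1)" using near(2)[of z] z s a by auto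
    also have "\<dots> \<le> \<bar>K\<bar> * \<delta> powr (p1 - 1)"
      using z s a p1 by (intro mult_mono powr_mono2) auto
    finally have "\<bar>l\<bar> \<le> \<bar>K\<bar> * \<delta> powr (p1 - 1)" .
    then have "\<bar>(a - s) * l\<bar> \<le> a * (\<bar>K\<bar> * \<delta> powr (p1 - 1))"
      using s by (simp add: abs_mult) (intro mult_mono, auto)
    then show ?thesis using z(4) by linarith
  qed
  show ?thesis
    apply (rule exI[of _ "max B1 (\<bar>gr a\<bar> + a * (\<bar>K\<bar> * \<delta> powr (p1 - 1)))"])
    using B1 B2 by (metis atLeastAtMost_iff greaterThanAtMost_iff le_max_iff_disj not_le)
qed



lemma gr_integrable:
  fixes gr :: "real \<Rightarrow> real"
  assumes dif: "\<And>t. t > 0 \<Longrightarrow> gr differentiable (at t)"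
    and B: "\<And>s. s\<in>{0<..t} \<Longrightarrow> \<bar>gr s\<bar> \<le> B"
  shows "gr integrable_on {0..t}"
proof -
  have cont: "continuous_on {0<..t} gr"
    using dif by (intro continuous_at_imp_continuous_on) (auto intro: differentiable_imp_continuous_within)
  have meas: "gr \<in> borel_measurable (lebesgue_on {0<..t})"
    by (rule continuous_imp_measurable_on_sets_lebesgue[OF cont]) auto
  have c1: "(\<lambda>_. B) integrable_on {0..t}" by (rule integrable_const_ivl)
  have eqs: "{0..t} = (if 0 \<le> t then insert 0 {0<..t} else {0<..t})" by auto
  have c2: "(\<lambda>_. B) integrable_on {0<..t}"
    using c1 by (cases "0 \<le> t") (auto simp: eqs integrable_on_insert_iff)
  have "gr integrable_on {0<..t}"
    by (rule measurable_bounded_by_integrable_imp_integrable[OF meas c2]) (use B in auto)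
  then show ?thesis
    by (cases "0 \<le> t") (auto simp: eqs integrable_on_insert_iff)
qed

lemma integral_id_0t: "t \<ge> 0 \<Longrightarrow> ((\<lambda>s::real. s) has_integral t^2/2) {0..t}"
proof -
  assume t: "t \<ge> 0"
  have "((\<lambda>s::real. s) has_integral ((\<lambda>s. s^2/2) t - (\<lambda>s. s^2/2) 0)) {0..t}"
    by (rule fundamental_theorem_of_calculus[OF t])
       (auto intro!: derivative_eq_intros simp: has_real_derivative_iff_has_vector_derivative[symmetric])
  then show ?thesis by simp
qed



lemma gr_pos:
  fixes gr :: "real \<Rightarrow> real"
  assumes dif: "\<And>t. t > 0 \<Longrightarrow> gr differentiable (at t)"
    and mon: "\<And>t. t > 0 \<Longrightarrow> deriv gr t * t - gr t \<ge> 0"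
    and g0: "gr 0 = 0"
    and lims: "Limsup (at_right 0) (\<lambda>t. ereal (\<bar>deriv gr t\<bar> / t powr (p1 - 1))) \<le> ereal C1"
    and p1: "p1 > 1"
    and c: "\<And>t. t \<ge> 0 \<Longrightarrow> integral {0..t} gr - gr t * t / cs \<ge> C3 * t powr (p2 + 1)"
    and C3: "C3 > 0" and cs: "cs > 2"
    and t: "t > 0"
  shows "gr t > 0"
proof (rule ccontr)
  assume neg: "\<not> gr t > 0"
  obtain \<delta> where d: "\<delta> > 0" "\<And>s. 0 < s \<and> s < \<delta> \<Longrightarrow> \<bar>deriv gr s\<bar> \<le> (C1 + 1) * s powr (p1 - 1)"
    using gr_near0[OF lims] by blast
  obtain B where B: "\<forall>s\<in>{0<..t}. \<bar>gr s\<bar> \<le> B"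
    using gr_bounded[OF dif d(1) _ p1 t, of "C1+1"] d(2) by blast
  have int: "gr integrable_on {0..t}" using gr_integrable[OF dif] B by blast
  have le: "gr s \<le> s * (gr t / t)" if "s \<in> {0..t}" for s
  proof (cases "s = 0")
    case True then show ?thesis using g0 by simp
  next
    case False
    then have "s > 0" using that by auto
    then have "gr s / s \<le> gr t / t" using gr_ratio_mono[OF dif mon] that by auto
    then show ?thesis using \<open>s > 0\<close> by (simp add: divide_le_eq mult.commute)
  qed
  have hi: "((\<lambda>s. s * (gr t / t)) has_integral (t^2/2) * (gr t / t)) {0..t}"
    by (rule has_integral_mult_left[OF integral_id_0t]) (use t in simp)
  have "integral {0..t} gr \<le> (t^2/2) * (gr t / t)"
    using integral_le[OF int _ le] hi by (metis has_integral_integrable integral_unique)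
  also have "\<dots> = gr t * t / 2" using t by (simp add: power2_eq_square)
  finally have G: "integral {0..t} gr \<le> gr t * t / 2" .
  have "C3 * t powr (p2 + 1) > 0" using C3 t by auto
  then have "gr t * t / 2 - gr t * t / cs > 0" using c[of t] G t by linarith
  moreover have "gr t * t / 2 - gr t * t / cs = (gr t * t) * (1/2 - 1/cs)" by (simp add: algebra_simps)
  moreover have "1/2 - 1/cs > 0" using cs by (simp add: field_simps)
  moreover have "gr t * t \<le> 0" using neg t by (simp add: mult_nonpos_nonneg)
  ultimately show False by (metis mult_nonpos_nonneg less_le_not_le order_less_imp_le)
qed

lemma gr_asymp:
  fixes gr :: "real \<Rightarrow> real"
  assumes dif: "\<And>t. t > 0 \<Longrightarrow> gr differentiable (at t)"
    and lim: "((\<lambda>t. deriv gr t / t powr (p2 - 1)) \<longlongrightarrow> C2) at_top"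
    and p2: "p2 > 0"
  shows "((\<lambda>t. gr t / t powr p2) \<longlongrightarrow> C2 / p2) at_top"
proof (rule lhospital_at_top_at_top[where f' = "deriv gr" and g' = "\<lambda>t. p2 * t powr (p2 - 1)"])
  show "LIM x at_top. x powr p2 :> at_top" unfolding filterlim_at_top
  proof
    fix Z :: real
    define x0 where "x0 = (\<bar>Z\<bar> + 1) powr (1/p2)"
    have "x0 > 0" by (simp add: x0_def)
    show "\<forall>\<^sub>F x in at_top. Z \<le> x powr p2"
      using eventually_ge_at_top[of x0]
    proof eventually_elim
      case (elim x)
      have "Z \<le> \<bar>Z\<bar> + 1" by simp
      also have "\<dots> = x0 powr p2" using p2 by (simp add: x0_def powr_powr)
      also have "\<dots> \<le> x powr p2" using elim \<open>x0 > 0\<close> p2 by (intro powr_mono2) auto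
      finally show ?case .
    qed
  qed
  show "\<forall>\<^sub>F x in at_top. p2 * x powr (p2 - 1) \<noteq> 0"
    using eventually_gt_at_top[of 0] by eventually_elim (use p2 in auto)
  show "\<forall>\<^sub>F x in at_top. DERIV gr x :> deriv gr x"
    using eventually_gt_at_top[of 0] by eventually_elim (use dif in \<open>auto simp: DERIV_deriv_iff_real_differentiable\<close>)
  show "\<forall>\<^sub>F x in at_top. ((\<lambda>x. x powr p2) has_real_derivative p2 * x powr (p2 - 1)) (at x)"
    using eventually_gt_at_top[of 0] by eventually_elim (auto intro!: derivative_eq_intros)
  have "((\<lambda>t. (deriv gr t / t powr (p2 - 1)) / p2) \<longlongrightarrow> C2 / p2) at_top"
    by (intro tendsto_intros lim) (use p2 in auto)
  then show "((\<lambda>t. deriv gr t / (p2 * t powr (p2 - 1))) \<longlongrightarrow> C2 / p2) at_top"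
    by (simp add: field_simps)
qed



lemma gr_bound:
  fixes gr :: "real \<Rightarrow> real"
  assumes dif: "\<And>t. t > 0 \<Longrightarrow> gr differentiable (at t)"
    and mon: "\<And>t. t > 0 \<Longrightarrow> deriv gr t * t - gr t \<ge> 0"
    and pos: "\<And>t. t > 0 \<Longrightarrow> gr t > 0"
    and lims: "Limsup (at_right 0) (\<lambda>t. ereal (\<bar>deriv gr t\<bar> / t powr (p1 - 1))) \<le> ereal C1"
    and asy: "((\<lambda>t. gr t / t powr p2) \<longlongrightarrow> L) at_top"
    and p1: "p1 > 0"
  shows "\<exists>C>0. \<forall>t>0. gr t \<le> C * (t powr p1 + t powr p2)"
proof -
  obtain \<delta> where d: "\<delta> > 0" "\<And>s. 0 < s \<and> s < \<delta> \<Longrightarrow> \<bar>deriv gr s\<bar> \<le> (C1 + 1) * s powr (p1 - 1)"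
    using gr_near0[OF lims] by blast
  have "\<forall>\<^sub>F t in at_top. gr t / t powr p2 < \<bar>L\<bar> + 1"
    using order_tendstoD(2)[OF asy, of "\<bar>L\<bar> + 1"] by simp
  then obtain T0 where T0: "\<And>t. t \<ge> T0 \<Longrightarrow> gr t / t powr p2 < \<bar>L\<bar> + 1"
    by (auto simp: eventually_at_top_linorder)
  define T where "T = max T0 \<delta>"
  have T: "T \<ge> T0" "T \<ge> \<delta>" "T > 0" using d by (auto simp: T_def)
  define C where "C = max (max (\<bar>C1\<bar> + 1) (\<bar>L\<bar> + 1)) (gr T / \<delta> powr p1)"
  have C: "C \<ge> \<bar>C1\<bar> + 1" "C \<ge> \<bar>L\<bar> + 1" "C \<ge> gr T / \<delta> powr p1" unfolding C_def by auto
  show ?thesis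
  proof (intro exI[of _ C] conjI allI impI)
    show "C > 0" using C(1) by linarith
    fix t :: real assume t: "t > 0"
    have ppos: "t powr p1 \<ge> 0" "t powr p2 \<ge> 0" by auto
    have "gr t \<le> C * t powr p1 \<or> gr t \<le> C * t powr p2"
    proof (cases "t < \<delta>")
      case True
      have "gr t \<le> deriv gr t * t" using mon[OF t] by simp
      also have "\<dots> \<le> \<bar>deriv gr t\<bar> * t" using t by (intro mult_right_mono) auto
      also have "\<dots> \<le> (C1 + 1) * t powr (p1 - 1) * t" using d(2)[of t] True t by (intro mult_right_mono) auto
      also have "\<dots> = (C1 + 1) * t powr p1" using t by (simp add: powr_diff field_simps)
      also have "\<dots> \<le> C * t powr p1" using C(1) by (intro mult_right_mono) auto
      finally show ?thesis by blast
    next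
      case False
      show ?thesis
      proof (cases "t \<ge> T0")
        case True
        have "gr t / t powr p2 < \<bar>L\<bar> + 1" using T0[OF True] .
        then have "gr t \<le> (\<bar>L\<bar> + 1) * t powr p2" using t by (simp add: divide_less_eq less_imp_le)
        also have "\<dots> \<le> C * t powr p2" using C(2) by (intro mult_right_mono) auto
        finally show ?thesis by blast
      next
        case F2: False
        then have tT: "t \<le> T" using T by auto
        have "gr t / t \<le> gr T / T" using gr_ratio_mono[OF dif mon t tT] .
        then have "gr t \<le> t * (gr T / T)" using t by (simp add: divide_le_eq mult.commute)
        also have "\<dots> \<le> T * (gr T / T)" using tT pos[OF T(3)] T(3) by (intro mult_right_mono) auto
        also have "\<dots> = gr T" using T by simp
        also have "\<dots> = (gr T / \<delta> powr p1) * \<delta> powr p1" using d by simp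
        also have "\<dots> \<le> C * t powr p1"
          using C(3) C(1) False d pos[OF T(3)] p1 by (intro mult_mono powr_mono2) auto
        finally show ?thesis by blast
      qed
    qed
    then show "gr t \<le> C * (t powr p1 + t powr p2)"
      using C(1) ppos by (smt (verit) distrib_left mult_nonneg_nonneg)
  qed
qed



lemma int_powr_tail:
  assumes e: "e < -1"
  shows "integrable lborel (\<lambda>t::real. indicator {1..} t * t powr e)"
proof -
  have "(\<lambda>t::real. t powr e) integrable_on {1..}"
    using has_integral_powr_to_inf[OF e zero_less_one] by (auto simp: integrable_on_def)
  then have "(\<lambda>t::real. t powr e) absolutely_integrable_on {1..}"
    by (subst absolutely_integrable_on_iff_nonneg) auto
  then have "integrable lebesgue (\<lambda>t::real. indicator {1..} t *\<^sub>R t powr e)"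
    by (simp add: set_integrable_def)
  then show ?thesis
    by (subst (asm) integrable_completion) auto
qed

lemma int_lorentz_1d:
  assumes a: "a > 1/2" and c: "c > 0"
  shows "integrable lborel (\<lambda>t::real. (1 + t^2/c) powr (-a))"
proof -
  define m where "m t = indicator {-1..1} t + c powr a * (indicator {1..} t * t powr (-2*a)
                   + indicator {1..} (-t) * (-t) powr (-2*a))" for t :: real
  have i1: "integrable lborel (\<lambda>t::real. indicator {1..} t * t powr (-2*a))"
    by (rule int_powr_tail) (use a in auto)
  have i2: "integrable lborel (\<lambda>t::real. indicator {1..} (-t) * (-t) powr (-2*a))"
    using lborel_integrable_real_affine[OF i1, of "-1" 0] by simp
  have i0: "integrable lborel (\<lambda>t::real. indicator {-1..1} t :: real)"
    by (rule integrable_real_indicator) auto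
  have im: "integrable lborel m"
    unfolding m_def by (intro Bochner_Integration.integrable_add integrable_mult_right i0 i1 i2)
  show ?thesis
  proof (rule Bochner_Integration.integrable_bound[OF im])
    show "(\<lambda>t::real. (1 + t^2/c) powr (-a)) \<in> borel_measurable lborel" by measurable
    show "AE x in lborel. norm ((1 + x^2/c) powr (-a)) \<le> norm (m x)"
    proof (rule AE_I2)
      fix t :: real
      have base: "1 + t^2/c \<ge> 1" using c by auto
      have mnn: "m t \<ge> indicator {-1..1} t + c powr a * (indicator {1..} t * t powr (-2*a))"
                "m t \<ge> indicator {-1..1} t + c powr a * (indicator {1..} (-t) * (-t) powr (-2*a))"
        unfolding m_def by (auto intro!: mult_left_mono simp: indicator_def)
      have key: "(1 + t^2/c) powr (-a) \<le> c powr a * (\<bar>t\<bar> powr (-2*a))" if t1: "\<bar>t\<bar> \<ge> 1"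
      proof -
        have "(1 + t^2/c) powr (-a) \<le> (t^2/c) powr (-a)"
        proof (rule powr_mono2')
          have "t \<noteq> 0" using t1 by auto
          then show "0 < t^2/c" using c by simp
        qed (use a in auto)
        also have "(t^2/c) powr (-a) = (t^2) powr (-a) / c powr (-a)"
          using c by (simp add: powr_divide)
        also have "(t^2) powr (-a) = \<bar>t\<bar> powr (-2*a)"
        proof -
          have "\<bar>t\<bar> powr 2 = \<bar>t\<bar>^2" using t1 by (subst powr_realpow[symmetric]) auto
          then have eq: "t^2 = \<bar>t\<bar> powr 2" by simp
          have "(t^2) powr (-a) = (\<bar>t\<bar> powr 2) powr (-a)" by (simp only: eq)
          also have "\<dots> = \<bar>t\<bar> powr (2 * (-a))" by (rule powr_powr)
          finally show ?thesis by simp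
        qed
        also have "\<bar>t\<bar> powr (-2*a) / c powr (-a) = c powr a * (\<bar>t\<bar> powr (-2*a))"
          by (simp add: powr_minus divide_inverse)
        finally show ?thesis .
      qed
      have nn: "m t \<ge> 0" unfolding m_def by (auto intro!: add_nonneg_nonneg mult_nonneg_nonneg simp: indicator_def)
      show "norm ((1 + t^2/c) powr (-a)) \<le> norm (m t)"
      proof (cases "\<bar>t\<bar> \<le> 1")
        case True
        have "(1 + t^2/c) powr (-a) \<le> 1"
        proof -
          have "1 \<le> (1 + t^2/c) powr a" using base a by (intro ge_one_powr_ge_zero) auto
          then show ?thesis by (simp add: powr_minus inverse_le_1_iff)
        qed
        also have "1 \<le> m t"
        proof -
          have "0 \<le> c powr a * (indicator {1..} t * t powr (-2*a))" by (simp add: indicator_def)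
          moreover have "indicator {-1..1} t = (1::real)" using True by (simp add: indicator_def abs_le_iff)
          ultimately show ?thesis using mnn(1) by linarith
        qed
        finally show ?thesis using nn by simp
      next
        case False
        show ?thesis
        proof (cases "t \<ge> 1")
          case True
          then have "(1 + t^2/c) powr (-a) \<le> m t" using key mnn(1) False by (auto simp: indicator_def)
          then show ?thesis using nn by simp
        next
          case F2: False
          then have "-t \<ge> 1" using False by auto
          then have "(1 + t^2/c) powr (-a) \<le> m t" using key mnn(2) False by (auto simp: indicator_def)
          then show ?thesis using nn by simp
        qed
      qed
    qed
  qed
qed



lemma int_lorentz_nd:
  fixes c s :: real
  assumes c: "c > 0" and s: "2 * s > real DIM('a::euclidean_space)"
  shows "integrable lborel (\<lambda>x::'a. (1 + (norm x)^2/c) powr (-s))"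
proof -
  define D where "D = real DIM('a)"
  have D: "D > 0" unfolding D_def by simp
  define a where "a = s / D"
  have a: "a > 1/2" using s D by (simp add: a_def D_def field_simps)
  define h where "h t = (1 + t^2/c) powr (-a)" for t :: real
  have ih: "integrable lborel h" unfolding h_def by (rule int_lorentz_1d[OF a c])
  have hnn: "h t \<ge> 0" for t unfolding h_def by simp
  have hm[measurable]: "h \<in> borel_measurable borel" unfolding h_def by measurable
  have fin: "(\<integral>\<^sup>+t. ennreal (h t) \<partial>lborel) < \<infinity>"
    using ih hnn by (simp add: integrable_iff_bounded)
  define P where "P x = (\<Prod>b\<in>Basis. h (x \<bullet> b))" for x :: 'a
  have iP: "integrable lborel P"
  proof (rule integrableI_nonneg)
    show "P \<in> borel_measurable lborel" unfolding P_def by measurable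
    show "AE x in lborel. 0 \<le> P x" unfolding P_def using hnn by (auto intro: prod_nonneg)
    have "(\<integral>\<^sup>+x. ennreal (P x) \<partial>lborel) = (\<integral>\<^sup>+x. (\<Prod>b\<in>Basis. ennreal (h ((x::'a) \<bullet> b))) \<partial>lborel)"
      unfolding P_def using hnn by (simp add: prod_ennreal)
    also have "\<dots> = (\<Prod>b\<in>(Basis::'a set). (\<integral>\<^sup>+t. ennreal (h t) \<partial>lborel))"
      by (rule nn_integral_lborel_prod) auto
    also have "\<dots> < \<infinity>" using fin by (simp add: power_less_top_ennreal)
    finally show "(\<integral>\<^sup>+x. ennreal (P x) \<partial>lborel) < \<infinity>" .
  qed
  show ?thesis
  proof (rule Bochner_Integration.integrable_bound[OF iP])
    show "(\<lambda>x::'a. (1 + (norm x)^2/c) powr (-s)) \<in> borel_measurable lborel" by measurable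
    show "AE x in lborel. norm ((1 + (norm x)^2/c) powr (-s)) \<le> norm (P x)"
    proof (rule AE_I2)
      fix x :: 'a
      define u where "u = 1 + (norm x)^2/c"
      have u: "u \<ge> 1" using c by (simp add: u_def)
      have "(\<Prod>b\<in>(Basis::'a set). u powr (-a)) \<le> P x"
        unfolding P_def
      proof (rule prod_mono, intro ballI conjI)
        fix b :: 'a assume b: "b \<in> Basis"
        show "0 \<le> u powr (-a)" by simp
        have "\<bar>x \<bullet> b\<bar> \<le> norm x" by (rule Basis_le_norm[OF b])
        then have "(x \<bullet> b)^2 \<le> (norm x)^2" by (metis abs_le_square_iff abs_norm_cancel)
        then have "1 + (x \<bullet> b)^2/c \<le> u" unfolding u_def using c by (simp add: divide_right_mono)
        then show "u powr (-a) \<le> h (x \<bullet> b)" unfolding h_def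
          using a c by (intro powr_mono2') (auto intro: add_pos_nonneg)
      qed
      also have "(\<Prod>b\<in>(Basis::'a set). u powr (-a)) = (u powr (-a)) ^ DIM('a)" by simp
      also have "\<dots> = u powr (-s)"
      proof -
        have "(u powr (-a)) ^ DIM('a) = (u powr (-a)) powr D"
          unfolding D_def using u by (subst powr_realpow) auto
        also have "\<dots> = u powr (-a * D)" by (rule powr_powr)
        also have "-a * D = -s" using D by (simp add: a_def)
        finally show ?thesis .
      qed
      finally have "u powr (-s) \<le> P x" .
      moreover have "P x \<ge> 0" unfolding P_def using hnn by (auto intro: prod_nonneg)
      ultimately show "norm ((1 + (norm x)^2/c) powr (-s)) \<le> norm (P x)" by (simp add: u_def)
    qed
  qed
qed



definition Wc :: "'n::finite itself \<Rightarrow> real" where "Wc n = dimR n * (dimR n - 2)"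
definition We :: "'n::finite itself \<Rightarrow> real" where "We n = - (dimR n - 2) / 2"
definition Wu :: "'n::finite itself \<Rightarrow> real^'n \<Rightarrow> real" where "Wu n x = 1 + (x \<bullet> x) / Wc n"

lemma Wc_pos: "dimR n > 2 \<Longrightarrow> Wc n > 0"
  unfolding Wc_def by simp

lemma Wu_ge1: "dimR n > 2 \<Longrightarrow> Wu n x \<ge> 1"
  unfolding Wu_def Wc_def by simp

lemma W_alt: "W n x = Wu n x powr We n"
  unfolding W_def Wu_def Wc_def We_def by (simp add: power2_norm_eq_inner)

lemma W_has_derivative:
  assumes d: "dimR n > 2"
  shows "(W n has_derivative (\<lambda>h. (2 * (x \<bullet> h) / Wc n) * (We n * Wu n x powr (We n - 1)))) (at x)"
proof -
  have c: "Wc n > 0" using d by (simp add: Wc_def)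
  have W: "W n = (\<lambda>x. (\<lambda>u. u powr We n) (Wu n x))" using W_alt by auto
  have pos: "Wu n x > 0" using Wu_ge1[OF d, of x] by simp
  have q: "(Wu n has_derivative (\<lambda>h. 2 * (x \<bullet> h) / Wc n)) (at x)"
    unfolding Wu_def[abs_def]
    by (rule derivative_eq_intros refl)+ (use c in \<open>auto simp: inner_commute field_simps\<close>)
  show ?thesis unfolding W
    by (rule DERIV_compose_FDERIV[OF has_real_derivative_powr[OF pos] q])
qed

lemma LambdaW_eq:
  assumes d: "dimR n > 2"
  shows "LambdaW n x = (dimR n - 2) / 2 * W n x + (2 * (x \<bullet> x) / Wc n) * (We n * Wu n x powr (We n - 1))"
  unfolding LambdaW_def frechet_derivative_at[OF W_has_derivative[OF d, of x], symmetric] by simp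

lemma LambdaW_bound:
  assumes d: "dimR n > 2"
  shows "\<bar>LambdaW n x\<bar> \<le> (dimR n - 2) / 2 * W n x"
proof -
  define u where "u = Wu n x"
  have u: "u \<ge> 1" using Wu_ge1[OF d] by (simp add: u_def)
  have c: "Wc n > 0" using d by (simp add: Wc_def)
  have Wx: "W n x = u powr (We n - 1) * u" using u by (simp add: W_alt u_def powr_diff)
  have r: "(x \<bullet> x) / Wc n = u - 1" by (simp add: u_def Wu_def)
  define P where "P = u powr (We n - 1)"
  have "LambdaW n x = (dimR n - 2) / 2 * (P * u) + (2 * (x \<bullet> x) / Wc n) * (We n * P)"
    unfolding LambdaW_eq[OF d] Wx P_def u_def by simp
  also have "\<dots> = (dimR n - 2) / 2 * P * (u - 2 * ((x \<bullet> x) / Wc n))"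
    using Wc_pos[OF d] by (simp add: We_def) (simp add: field_simps)
  finally have "LambdaW n x = (dimR n - 2) / 2 * u powr (We n - 1) * (u - 2 * ((x \<bullet> x) / Wc n))"
    by (simp add: P_def)
  also have "\<dots> = (dimR n - 2) / 2 * u powr (We n - 1) * (2 - u)" unfolding r by simp
  finally have L: "LambdaW n x = (dimR n - 2) / 2 * u powr (We n - 1) * (2 - u)" .
  have "\<bar>2 - u\<bar> \<le> u" using u by auto
  then have "\<bar>LambdaW n x\<bar> \<le> (dimR n - 2) / 2 * u powr (We n - 1) * u"
    unfolding L using d by (simp add: abs_mult mult_left_mono)
  then show ?thesis using Wx by simp
qed

lemma W_pos: "dimR n > 2 \<Longrightarrow> W n x > 0"
  using Wu_ge1[of n x] by (simp add: W_alt)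

lemma W_le1: "dimR n > 2 \<Longrightarrow> W n x \<le> 1"
proof -
  assume d: "dimR n > 2"
  have "1 \<le> Wu n x powr (- We n)" using Wu_ge1[OF d, of x] d by (intro ge_one_powr_ge_zero) (auto simp: We_def)
  moreover have "W n x = inverse (Wu n x powr (- We n))" by (simp add: W_alt powr_minus)
  ultimately show ?thesis by (simp add: inverse_le_1_iff)
qed

lemma continuous_Wu: "continuous_on UNIV (Wu n)"
proof -
  have "Wu n = (\<lambda>x. 1 + (x \<bullet> x) * inverse (Wc n))" by (auto simp: Wu_def divide_inverse)
  then show ?thesis by (simp only:) (intro continuous_intros)
qed

lemma Wu_ne0: "dimR n > 2 \<Longrightarrow> Wu n x \<noteq> 0"
  using Wu_ge1[of n x] by simp

lemma continuous_W: "dimR n > 2 \<Longrightarrow> continuous_on UNIV (W n)"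
proof -
  assume d: "dimR n > 2"
  have "Wu n x > 0" for x using Wu_ge1[OF d, of x] by simp
  then show ?thesis unfolding W_alt[abs_def]
    by (intro continuous_intros continuous_Wu) (auto simp: Wu_ne0[OF d])
qed

lemma continuous_LambdaW: "dimR n > 2 \<Longrightarrow> continuous_on UNIV (LambdaW n)"
proof -
  assume d: "dimR n > 2"
  have "LambdaW n = (\<lambda>x. (dimR n - 2) / 2 * W n x + (2 * (x \<bullet> x) / Wc n) * (We n * Wu n x powr (We n - 1)))"
    using LambdaW_eq[OF d] by auto
  moreover have "Wu n x > 0" for x using Wu_ge1[OF d, of x] by simp
  ultimately show ?thesis using d Wc_pos[OF d]
    by (simp only:) (intro continuous_intros continuous_Wu continuous_W, auto simp: Wu_ne0[OF d])
qed

lemma W_powr_integrable: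
  fixes n :: "'n::finite itself"
  assumes d: "dimR n > 2" and q: "(dimR n - 2) * q > dimR n"
  shows "integrable lborel (\<lambda>x. W n x powr q)"
proof -
  have c: "Wc n > 0" using d by (simp add: Wc_def)
  have "integrable lborel (\<lambda>x::real^'n. (1 + (norm x)^2 / Wc n) powr (- ((dimR n - 2) * q / 2)))"
    by (rule int_lorentz_nd[OF c]) (use q in \<open>simp add: dimR_def\<close>)
  moreover have "W n x powr q = (1 + (norm x)^2 / Wc n) powr (- ((dimR n - 2) * q / 2))" for x
  proof -
    have e: "We n * q = - ((dimR n - 2) * q / 2)" by (simp add: We_def field_simps)
    have "W n x powr q = Wu n x powr (We n * q)" by (simp add: W_alt powr_powr)
    also have "\<dots> = (1 + (norm x)^2 / Wc n) powr (- ((dimR n - 2) * q / 2))"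
      unfolding e by (simp add: Wu_def power2_norm_eq_inner)
    finally show ?thesis .
  qed
  ultimately show ?thesis by simp
qed



lemma dct_limit:
  fixes n :: "'n::finite itself" and gr :: "real \<Rightarrow> real"
  assumes d: "dimR n > 2"
    and cont: "continuous_on {0<..} gr"
    and bnd: "\<And>t. t > 0 \<Longrightarrow> \<bar>gr t\<bar> \<le> C * (t powr p1 + t powr p2)"
    and asy: "((\<lambda>t. gr t / t powr p2) \<longlongrightarrow> L) at_top"
    and p: "0 < p1" "p1 \<le> p2" and q: "(dimR n - 2) * (p1 + 1) > dimR n"
  shows "((\<lambda>l. \<integral>x. gr (l * W n x) / l powr p2 * LambdaW n x \<partial>lborel) \<longlongrightarrow>
            L * (\<integral>x. W n x powr p2 * LambdaW n x \<partial>lborel)) at_top"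
proof -
  define s where "s l x = (if l > 0 then gr (l * W n x) / l powr p2 * LambdaW n x else 0)" for l x
  define f where "f x = L * (W n x powr p2 * LambdaW n x)" for x
  define w where "w x = \<bar>C\<bar> * (dimR n - 2) * W n x powr (p1 + 1)" for x
  have Wp: "W n x > 0" "W n x \<le> 1" for x using W_pos[OF d] W_le1[OF d] by auto
  have cW: "continuous_on UNIV (W n)" by (rule continuous_W[OF d])
  have cL: "continuous_on UNIV (LambdaW n)" by (rule continuous_LambdaW[OF d])
  have mf: "f \<in> borel_measurable lborel"
    unfolding measurable_lborel2
  proof (rule borel_measurable_continuous_onI)
    have Wne: "\<forall>x\<in>UNIV. W n x \<noteq> 0" using Wp(1) by (metis less_irrefl)
    show "continuous_on UNIV f" unfolding f_def by (intro continuous_intros cW cL Wne)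
  qed
  have ms: "s l \<in> borel_measurable lborel" for l
  proof (cases "l > 0")
    case True
    have "continuous_on UNIV (\<lambda>x. gr (l * W n x))"
      by (rule continuous_on_compose2[OF cont]) (use True Wp cW in \<open>auto intro!: continuous_intros\<close>)
    then have "continuous_on UNIV (s l)"
      unfolding s_def using True cL by (auto intro!: continuous_intros)
    then show ?thesis unfolding measurable_lborel2 by (rule borel_measurable_continuous_onI)
  next
    case False
    then have "s l = (\<lambda>x. 0)" by (simp add: s_def fun_eq_iff)
    then show ?thesis by simp
  qed
  have iw: "integrable lborel w"
    unfolding w_def by (intro integrable_mult_right W_powr_integrable[OF d q])
  have lim: "AE x in lborel. ((\<lambda>l. s l x) \<longlongrightarrow> f x) at_top"
  proof (rule AE_I2)
    fix x
    have "LIM l at_top. l * W n x :> at_top"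
      by (rule filterlim_at_top_mult_tendsto_pos[OF tendsto_const Wp(1) filterlim_ident])
    from filterlim_compose[OF asy this]
    have "((\<lambda>l. gr (l * W n x) / (l * W n x) powr p2 * W n x powr p2 * LambdaW n x) \<longlongrightarrow> L * W n x powr p2 * LambdaW n x) at_top"
      by (intro tendsto_intros)
    moreover have "\<forall>\<^sub>F l in at_top. gr (l * W n x) / (l * W n x) powr p2 * W n x powr p2 * LambdaW n x = s l x"
      using eventually_gt_at_top[of 0]
    proof eventually_elim
      case (elim l)
      have "(l * W n x) powr p2 = l powr p2 * W n x powr p2" using elim Wp(1)[of x] by (simp add: powr_mult)
      then show ?case using elim Wp(1)[of x] by (simp add: s_def)
    qed
    ultimately show "((\<lambda>l. s l x) \<longlongrightarrow> f x) at_top"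
      unfolding f_def by (simp add: tendsto_cong mult.assoc)
  qed
  have bound: "\<forall>\<^sub>F l in at_top. AE x in lborel. norm (s l x) \<le> w x"
    using eventually_ge_at_top[of 1]
  proof eventually_elim
    case (elim l)
    show ?case
    proof (rule AE_I2)
      fix x
      define v where "v = W n x"
      have v: "0 < v" "v \<le> 1" using Wp unfolding v_def by auto
      have lv: "l * v > 0" using elim v by auto
      have A: "(l * v) powr p1 + (l * v) powr p2 \<le> 2 * (l powr p2 * v powr p1)"
      proof -
        have "(l * v) powr p1 + (l * v) powr p2 = l powr p1 * v powr p1 + l powr p2 * v powr p2"
          using elim v by (simp add: powr_mult)
        also have "\<dots> \<le> l powr p2 * v powr p1 + l powr p2 * v powr p1"
          using elim v p by (intro add_mono mult_mono powr_mono powr_mono') auto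
        finally show ?thesis by simp
      qed
      have "\<bar>gr (l * v)\<bar> \<le> C * ((l * v) powr p1 + (l * v) powr p2)" by (rule bnd[OF lv])
      also have "\<dots> \<le> \<bar>C\<bar> * ((l * v) powr p1 + (l * v) powr p2)"
        by (intro mult_right_mono) auto
      also have "\<dots> \<le> \<bar>C\<bar> * (2 * (l powr p2 * v powr p1))"
        using A by (intro mult_left_mono) auto
      finally have g1: "\<bar>gr (l * v)\<bar> \<le> \<bar>C\<bar> * (2 * (l powr p2 * v powr p1))" .
      have lp: "l powr p2 > 0" using elim by simp
      have "\<bar>gr (l * v) / l powr p2\<bar> \<le> \<bar>C\<bar> * (2 * v powr p1)"
        using g1 lp by (simp add: abs_divide divide_le_eq mult.commute mult.left_commute)
      moreover have "\<bar>LambdaW n x\<bar> \<le> (dimR n - 2) / 2 * v" using LambdaW_bound[OF d] by (simp add: v_def)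
      ultimately have "\<bar>gr (l * v) / l powr p2 * LambdaW n x\<bar> \<le> (\<bar>C\<bar> * (2 * v powr p1)) * ((dimR n - 2) / 2 * v)"
        unfolding abs_mult by (intro mult_mono) auto
      also have "\<dots> = w x" using v d by (simp add: w_def v_def powr_add field_simps)
      finally show "norm (s l x) \<le> w x" using elim by (simp add: s_def v_def)
    qed
  qed
  have conv: "((\<lambda>l. integral\<^sup>L lborel (s l)) \<longlongrightarrow> integral\<^sup>L lborel f) at_top"
    by (rule integral_dominated_convergence_at_top[OF mf ms iw lim bound])
  have eq: "\<forall>\<^sub>F l in at_top. integral\<^sup>L lborel (s l) = (\<integral>x. gr (l * W n x) / l powr p2 * LambdaW n x \<partial>lborel)"
    using eventually_gt_at_top[of 0] by eventually_elim (rule Bochner_Integration.integral_cong, auto simp: s_def)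
  show ?thesis using tendsto_cong[OF eq] conv unfolding f_def by simp
qed



definition tm :: "nat \<Rightarrow> real \<Rightarrow> real" where
  "tm m s = (if s < 1 then (1/(1-s))^m * exp (-(1/(1-s))) else 0)"

lemma tm_deriv_lt:
  assumes s: "s < 1"
  shows "DERIV (tm m) s :> real m * tm (Suc m) s - tm (Suc (Suc m)) s"
proof -
  define F where "F s = (1/(1-s))^m * exp (-(1/(1-s)))" for s :: real
  have "DERIV F s :> real m * tm (Suc m) s - tm (Suc (Suc m)) s"
  proof -
    have ne: "1 - s \<noteq> 0" using s by simp
    define y where "y = 1/(1-s)"
    have y: "y > 0" using s by (simp add: y_def)
    have DG: "DERIV (\<lambda>y. y^m * exp (-y)) y :> (real m * y^(m - 1) * exp (-y) - y^m * exp (-y))"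
      by (auto intro!: derivative_eq_intros)
    have Dy: "DERIV (\<lambda>s. 1/(1-s)) s :> y^2"
      using ne by (auto intro!: derivative_eq_intros simp: y_def power2_eq_square field_simps)
    have "DERIV F s :> (real m * y^(m - 1) * exp (-y) - y^m * exp (-y)) * y^2"
      unfolding F_def using DERIV_chain2[OF DG[unfolded y_def] Dy] by (simp add: y_def)
    moreover have "(real m * y^(m - 1) * exp (-y) - y^m * exp (-y)) * y^2
                   = real m * tm (Suc m) s - tm (Suc (Suc m)) s"
    proof (cases m)
      case 0 then show ?thesis using s by (simp add: tm_def y_def power2_eq_square)
    next
      case (Suc k)
      have "tm (Suc m) s = y^(Suc m) * exp (-y)" "tm (Suc (Suc m)) s = y^(Suc (Suc m)) * exp (-y)"
        using s by (simp_all add: tm_def y_def)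
      then show ?thesis using Suc by (simp add: power2_eq_square algebra_simps)
    qed
    ultimately show ?thesis by simp
  qed
  then show ?thesis
    by (rule has_field_derivative_transform_within_open[where S = "{..<1}"]) (use s in \<open>auto simp: tm_def F_def\<close>)
qed

lemma tm_deriv_gt:
  assumes s: "s > 1"
  shows "DERIV (tm m) s :> real m * tm (Suc m) s - tm (Suc (Suc m)) s"
proof -
  have "DERIV (\<lambda>_. 0) s :> 0" by simp
  then have "DERIV (tm m) s :> 0"
    by (rule has_field_derivative_transform_within_open[where S = "{1<..}"]) (use s in \<open>auto simp: tm_def\<close>)
  then show ?thesis using s by (simp add: tm_def)
qed

lemma tm_deriv_1: "DERIV (tm m) 1 :> real m * tm (Suc m) 1 - tm (Suc (Suc m)) 1"
proof -
  have "DERIV (tm m) 1 :> 0"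
    unfolding DERIV_def
  proof (rule filterlim_split_at)
    have "\<forall>\<^sub>F h in at_right (0::real). (tm m (1 + h) - tm m 1) / h = 0"
      by (simp add: eventually_at_right_field tm_def) (auto intro: exI[of _ 1])
    then show "((\<lambda>h. (tm m (1 + h) - tm m 1) / h) \<longlongrightarrow> 0) (at_right 0)"
      by (rule tendsto_eventually)
  next
    have lim_z: "LIM h (at_left (0::real)). - inverse h :> at_top"
      using filterlim_inverse_at_bot_neg by (simp add: filterlim_uminus_at_top)
    have "((\<lambda>h. - ((- inverse h) ^ Suc m / exp (- inverse h))) \<longlongrightarrow> - 0) (at_left (0::real))"
      by (intro tendsto_minus filterlim_compose[OF tendsto_power_div_exp_0 lim_z])
    moreover have "\<forall>\<^sub>F h in at_left (0::real). - ((- inverse h) ^ Suc m / exp (- inverse h)) = (tm m (1 + h) - tm m 1) / h"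
    proof -
      have "\<forall>\<^sub>F h in at_left (0::real). h < 0" by (simp add: eventually_at_left_field) (auto intro: exI[of _ "-1"])
      then show ?thesis
      proof eventually_elim
        case (elim h)
        have e1: "1 / (1 - (1 + h)) = - inverse h" by (simp add: divide_inverse)
        have "(tm m (1 + h) - tm m 1) / h = (- inverse h)^m * exp (- (- inverse h)) / h"
          using elim by (simp add: tm_def e1 inverse_eq_divide)
        also have "\<dots> = - ((- inverse h) ^ Suc m / exp (- inverse h))"
          using elim by (simp add: exp_minus field_simps)
        finally show ?case by simp
      qed
    qed
    ultimately show "((\<lambda>h. (tm m (1 + h) - tm m 1) / h) \<longlongrightarrow> 0) (at_left 0)"
      by (simp add: tendsto_cong)
  qed
  then show ?thesis by (simp add: tm_def)
qed

lemma tm_DERIV: "DERIV (tm m) s :> real m * tm (Suc m) s - tm (Suc (Suc m)) s"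
  using tm_deriv_lt[of s m] tm_deriv_gt[of s m] tm_deriv_1[of m]
  by (cases "s < 1"; cases "s > 1") auto

lemma tm_nonneg: "tm m s \<ge> 0"
  by (simp add: tm_def)

lemma tm0_le1: "tm 0 s \<le> 1"
  by (simp add: tm_def)

lemma tm0_pos: "s < 1 \<Longrightarrow> tm 0 s > 0"
  by (simp add: tm_def)

lemma tm_zero: "s \<ge> 1 \<Longrightarrow> tm m s = 0"
  by (simp add: tm_def)



inductive_set TF :: "(real^'n::finite \<Rightarrow> real) set" where
  TF_const: "(\<lambda>x. c) \<in> TF"
| TF_coord: "(\<lambda>x. x $ i) \<in> TF"
| TF_bump: "(\<lambda>x. tm m (a * (x \<bullet> x))) \<in> TF"
| TF_add: "f \<in> TF \<Longrightarrow> g \<in> TF \<Longrightarrow> (\<lambda>x. f x + g x) \<in> TF"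
| TF_mult: "f \<in> TF \<Longrightarrow> g \<in> TF \<Longrightarrow> (\<lambda>x. f x * g x) \<in> TF"

lemma TF_cmult: "f \<in> TF \<Longrightarrow> (\<lambda>x. c * f x) \<in> TF"
  using TF_mult[OF TF_const] by blast

lemma TF_diff: "f \<in> TF \<Longrightarrow> g \<in> TF \<Longrightarrow> (\<lambda>x. f x - g x) \<in> TF"
proof -
  assume f: "f \<in> TF" and g: "g \<in> TF"
  have "(\<lambda>x. f x + (-1) * g x) \<in> TF" by (intro TF_add f TF_cmult g)
  then show ?thesis by simp
qed

lemma TF_deriv:
  assumes "f \<in> TF"
  shows "\<exists>D. (\<forall>x. (f has_derivative D x) (at x)) \<and> (\<forall>i. (\<lambda>x. D x (axis i 1)) \<in> TF)"
  using assms
proof induction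
  case (TF_const c)
  show ?case by (intro exI[of _ "\<lambda>x h. 0"]) (auto intro: TF.TF_const)
next
  case (TF_coord i)
  have "((\<lambda>x::real^'a. x $ i) has_derivative (\<lambda>h. h $ i)) (at x)" for x
    by (rule bounded_linear_imp_has_derivative) (rule bounded_linear_vec_nth)
  moreover have "(\<lambda>x::real^'a. axis j 1 $ i) \<in> TF" for j by (rule TF.TF_const)
  ultimately show ?case by (intro exI[of _ "\<lambda>x h. h $ i"]) auto
next
  case (TF_bump m a)
  define t' where "t' s = real m * tm (Suc m) s - tm (Suc (Suc m)) s" for s
  have q: "((\<lambda>x::real^'a. a * (x \<bullet> x)) has_derivative (\<lambda>h. a * (h \<bullet> x + x \<bullet> h))) (at x)" for x
    by (auto intro!: derivative_eq_intros)
  have D: "((\<lambda>x::real^'a. tm m (a * (x \<bullet> x))) has_derivative (\<lambda>h. a * (h \<bullet> x + x \<bullet> h) * t' (a * (x \<bullet> x)))) (at x)" for x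
    using DERIV_compose_FDERIV[OF tm_DERIV q] unfolding t'_def .
  have comp: "(\<lambda>x::real^'a. a * (axis i 1 \<bullet> x + x \<bullet> axis i 1) * t' (a * (x \<bullet> x))) \<in> TF" for i
  proof -
    have "(\<lambda>x::real^'a. (2 * a) * (x $ i * t' (a * (x \<bullet> x)))) \<in> TF"
      unfolding t'_def
      by (intro TF_cmult TF_mult TF_diff TF.TF_coord TF.TF_bump)
    moreover have "(\<lambda>x::real^'a. a * (axis i 1 \<bullet> x + x \<bullet> axis i 1) * t' (a * (x \<bullet> x)))
                 = (\<lambda>x. (2 * a) * (x $ i * t' (a * (x \<bullet> x))))"
      by (auto simp: inner_axis inner_axis' fun_eq_iff)
    ultimately show ?thesis by simp
  qed
  show ?case by (intro exI[of _ "\<lambda>x h. a * (h \<bullet> x + x \<bullet> h) * t' (a * (x \<bullet> x))"]) (use D comp in auto)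
next
  case (TF_add f g)
  then obtain Df Dg where Df: "\<forall>x. (f has_derivative Df x) (at x)" "\<forall>i. (\<lambda>x. Df x (axis i 1)) \<in> TF"
    and Dg: "\<forall>x. (g has_derivative Dg x) (at x)" "\<forall>i. (\<lambda>x. Dg x (axis i 1)) \<in> TF" by blast
  show ?case
    by (intro exI[of _ "\<lambda>x h. Df x h + Dg x h"])
       (use Df Dg in \<open>auto intro!: has_derivative_add TF.TF_add\<close>)
next
  case (TF_mult f g)
  then obtain Df Dg where Df: "\<forall>x. (f has_derivative Df x) (at x)" "\<forall>i. (\<lambda>x. Df x (axis i 1)) \<in> TF"
    and Dg: "\<forall>x. (g has_derivative Dg x) (at x)" "\<forall>i. (\<lambda>x. Dg x (axis i 1)) \<in> TF" by blast
  show ?case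
    by (intro exI[of _ "\<lambda>x h. f x * Dg x h + Df x h * g x"])
       (use Df Dg TF_mult.hyps in \<open>auto intro!: has_derivative_mult TF.TF_add TF.TF_mult\<close>)
qed

lemma TF_partial:
  assumes f: "f \<in> TF"
  shows "partial i f \<in> TF"
proof -
  obtain D where D: "\<forall>x. (f has_derivative D x) (at x)" "\<forall>i. (\<lambda>x. D x (axis i 1)) \<in> TF"
    using TF_deriv[OF f] by blast
  have "partial i f = (\<lambda>x. D x (axis i 1))"
  proof
    fix x
    have "D x = frechet_derivative f (at x)" using D(1) by (intro frechet_derivative_at) auto
    then show "partial i f x = D x (axis i 1)" unfolding partial_def by simp
  qed
  then show ?thesis using D(2) by simp
qed

lemma TF_differentiable: "f \<in> TF \<Longrightarrow> f differentiable (at x)"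
  using TF_deriv[of f] unfolding differentiable_def by blast

lemma TF_continuous: "f \<in> TF \<Longrightarrow> continuous_on UNIV f"
  by (intro continuous_at_imp_continuous_on ballI differentiable_imp_continuous_within TF_differentiable)

lemma TF_iter: "f \<in> TF \<Longrightarrow> iter_partial is f \<in> TF"
  by (induction "is") (auto intro: TF_partial)

lemma TF_smooth: "f \<in> TF \<Longrightarrow> smooth_fun f"
  unfolding smooth_fun_def using TF_iter TF_continuous TF_differentiable by blast

lemma partial_zero_open:
  assumes S: "open S" "x \<in> S" and z: "\<And>y. y \<in> S \<Longrightarrow> f y = 0"
  shows "partial i f x = 0"
proof -
  have "((\<lambda>_. 0::real) has_derivative (\<lambda>h. 0)) (at x)" by simp
  then have "(f has_derivative (\<lambda>h. 0)) (at x)"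
    by (rule has_derivative_transform_within_open[OF _ S]) (use z in auto)
  then show ?thesis unfolding partial_def by (simp add: frechet_derivative_at[symmetric])
qed

lemma iter_partial_zero_open:
  assumes S: "open S" and z: "\<And>y. y \<in> S \<Longrightarrow> f y = 0"
  shows "y \<in> S \<Longrightarrow> iter_partial is f y = 0"
proof (induction "is" arbitrary: y)
  case Nil then show ?case using z by simp
next
  case (Cons i "is")
  show ?case using partial_zero_open[OF S Cons.prems] Cons.IH by simp
qed

definition bumpset :: "real \<Rightarrow> (real^'n::finite) set" where
  "bumpset a = {x. a * (x \<bullet> x) > 1}"

lemma open_bumpset: "open (bumpset a)"
  unfolding bumpset_def by (intro open_Collect_less continuous_intros)

lemma bump_zero: "x \<in> bumpset a \<Longrightarrow> tm m (a * (x \<bullet> x)) = 0"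
  unfolding bumpset_def by (simp add: tm_zero)

lemma bumpset_far:
  assumes a: "a > 0" and x: "norm x > max 1 (1/a)"
  shows "x \<in> bumpset a"
proof -
  have n1: "norm x > 1" "norm x > 1/a" using x by auto
  have "x \<bullet> x = norm x * norm x" by (simp add: power2_norm_eq_inner[symmetric] power2_eq_square)
  also have "\<dots> \<ge> norm x" using n1 mult_left_mono[of 1 "norm x" "norm x"] by simp
  finally have "a * (x \<bullet> x) \<ge> a * norm x" using a by simp
  moreover have "a * norm x > 1" using n1 a by (simp add: field_simps)
  ultimately show ?thesis unfolding bumpset_def by simp
qed

lemma bump_iter_test_fun:
  assumes a: "a > 0"
  shows "test_fun (iter_partial is (\<lambda>x::real^'n::finite. tm m (a * (x \<bullet> x))))"
  unfolding test_fun_def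
proof
  show "smooth_fun (iter_partial is (\<lambda>x::real^'n. tm m (a * (x \<bullet> x))))"
    by (intro TF_smooth TF_iter TF_bump)
  show "\<exists>R. \<forall>x::real^'n. R < norm x \<longrightarrow> iter_partial is (\<lambda>x. tm m (a * (x \<bullet> x))) x = 0"
  proof (intro exI[of _ "max 1 (1/a)"] allI impI)
    fix x :: "real^'n" assume "max 1 (1/a) < norm x"
    then have "x \<in> bumpset a" by (rule bumpset_far[OF a])
    then show "iter_partial is (\<lambda>x. tm m (a * (x \<bullet> x))) x = 0"
      using iter_partial_zero_open[where f="\<lambda>x::real^'n. tm m (a * (x \<bullet> x))" and S = "bumpset a", OF open_bumpset]
        bump_zero by blast
  qed
qed



lemma lborel_scale_integral:
  fixes f :: "'a::euclidean_space \<Rightarrow> 'b::{banach, second_countable_topology}"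
  assumes c: "c > 0" and f[measurable]: "f \<in> borel_measurable borel"
  shows "(\<integral>x. f (c *\<^sub>R x) \<partial>lborel) = (1 / c ^ DIM('a)) *\<^sub>R (\<integral>x. f x \<partial>lborel)"
proof -
  have L: "lborel = density (distr lborel borel (\<lambda>x::'a. 0 + c *\<^sub>R x)) (\<lambda>_. ennreal (\<bar>c\<bar>^DIM('a)))"
    using lborel_affine[of c "0::'a"] c by simp
  have "(\<integral>x. f x \<partial>lborel) = (\<integral>x. f x \<partial>density (distr lborel borel (\<lambda>x. 0 + c *\<^sub>R x)) (\<lambda>_. ennreal (\<bar>c\<bar>^DIM('a))))"
    by (subst L) (rule refl)
  also have "\<dots> = (\<integral>x. (\<bar>c\<bar>^DIM('a)) *\<^sub>R f x \<partial>distr lborel borel (\<lambda>x. 0 + c *\<^sub>R x))"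
    by (rule integral_density) auto
  also have "\<dots> = (\<integral>x. (\<bar>c\<bar>^DIM('a)) *\<^sub>R f (0 + c *\<^sub>R x) \<partial>lborel)"
    by (rule integral_distr) auto
  also have "\<dots> = (c^DIM('a)) *\<^sub>R (\<integral>x. f (c *\<^sub>R x) \<partial>lborel)" using c by simp
  finally show ?thesis using c by simp
qed

lemma partial_scale:
  fixes f :: "real^'n::finite \<Rightarrow> real"
  assumes dif: "\<And>x. f differentiable (at x)"
  shows "partial i (\<lambda>y. f (c *\<^sub>R y)) = (\<lambda>y. c * partial i f (c *\<^sub>R y))"
proof
  fix y :: "real^'n"
  have Df: "(f has_derivative frechet_derivative f (at (c *\<^sub>R y))) (at (c *\<^sub>R y))"
    using dif by (simp add: frechet_derivative_works)
  have Ds: "((\<lambda>y::real^'n. c *\<^sub>R y) has_derivative (\<lambda>h. c *\<^sub>R h)) (at y)"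
    by (auto intro!: derivative_eq_intros)
  have "((\<lambda>y. f (c *\<^sub>R y)) has_derivative (\<lambda>h. frechet_derivative f (at (c *\<^sub>R y)) (c *\<^sub>R h))) (at y)"
    using diff_chain_at[OF Ds Df] by (simp add: o_def)
  then have "frechet_derivative (\<lambda>y. f (c *\<^sub>R y)) (at y) = (\<lambda>h. frechet_derivative f (at (c *\<^sub>R y)) (c *\<^sub>R h))"
    by (simp add: frechet_derivative_at[symmetric])
  moreover have "linear (frechet_derivative f (at (c *\<^sub>R y)))"
    using Df has_derivative_linear by blast
  ultimately show "partial i (\<lambda>y. f (c *\<^sub>R y)) y = c * partial i f (c *\<^sub>R y)"
    unfolding partial_def by (simp add: linear_cmul)
qed

lemma partial_cmult:
  fixes f :: "real^'n::finite \<Rightarrow> real"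
  assumes dif: "\<And>x. f differentiable (at x)"
  shows "partial i (\<lambda>y. k * f y) = (\<lambda>y. k * partial i f y)"
proof
  fix y :: "real^'n"
  have Df: "(f has_derivative frechet_derivative f (at y)) (at y)"
    using dif by (simp add: frechet_derivative_works)
  have "((\<lambda>y. k * f y) has_derivative (\<lambda>h. k * frechet_derivative f (at y) h)) (at y)"
    using has_derivative_mult_right[OF Df] .
  then show "partial i (\<lambda>y. k * f y) y = k * partial i f y"
    unfolding partial_def by (simp add: frechet_derivative_at[symmetric])
qed

lemma integrable_cont_supp:
  fixes f :: "'a::euclidean_space \<Rightarrow> 'b::{banach, second_countable_topology}"
  assumes cont: "continuous_on UNIV f" and supp: "\<And>x. norm x > R \<Longrightarrow> f x = 0"
  shows "integrable lborel f"
proof -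
  have "integrable lborel (\<lambda>x. indicator (cball 0 R) x *\<^sub>R f x)"
    by (rule borel_integrable_compact) (use cont in \<open>auto intro: continuous_on_subset\<close>)
  moreover have "(\<lambda>x. indicator (cball 0 R) x *\<^sub>R f x) = f"
    using supp by (auto simp: fun_eq_iff indicator_def not_le)
  ultimately show ?thesis by simp
qed



lemma grad_weak: "u \<in> H1 \<Longrightarrow> weak_grad u (grad u)"
  unfolding H1_def has_weak_grad_def grad_def by (auto intro: someI[of "weak_grad u"])

lemma bump_test: "a > 0 \<Longrightarrow> test_fun (\<lambda>x::real^'n::finite. tm m (a * (x \<bullet> x)))"
  using bump_iter_test_fun[of a "[]" m] by simp

lemma bump_partial_test: "a > 0 \<Longrightarrow> test_fun (partial i (\<lambda>x::real^'n::finite. tm m (a * (x \<bullet> x))))"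
  using bump_iter_test_fun[of a "[i]" m] by simp

lemma bump_iter_supp:
  "a > 0 \<Longrightarrow> norm x > max 1 (1/a) \<Longrightarrow> iter_partial is (\<lambda>x::real^'n::finite. tm m (a * (x \<bullet> x))) x = 0"
  using iter_partial_zero_open[where f="\<lambda>x::real^'n. tm m (a * (x \<bullet> x))" and S = "bumpset a", OF open_bumpset]
    bump_zero bumpset_far by blast

lemma weak_identity:
  fixes n :: "'n::finite itself" and \<Phi> :: "real^'n \<Rightarrow> complex" and gr :: "real \<Rightarrow> real"
  assumes ws: "weak_solution n g \<omega> \<Phi>"
    and cont: "continuous_on UNIV \<Phi>"
    and real: "\<And>x. Im (\<Phi> x) = 0" "\<And>x. Re (\<Phi> x) > 0"
    and gval: "\<And>t. t > 0 \<Longrightarrow> g (complex_of_real t) = complex_of_real (gr t)"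
    and grc: "continuous_on {0<..} gr"
    and a: "a > 0"
  defines "\<phi> \<equiv> (\<lambda>x::real^'n. tm 0 (a * (x \<bullet> x)))"
  defines "R \<equiv> (\<lambda>x. Re (\<Phi> x))"
  shows "\<omega> * (\<integral>x. R x * \<phi> x \<partial>lborel) =
           (\<Sum>i\<in>UNIV. \<integral>x. R x * partial i (partial i \<phi>) x \<partial>lborel)
           + (\<integral>x. R x powr (4 / (dimR n - 2)) * R x * \<phi> x \<partial>lborel)
           + (\<integral>x. gr (R x) * \<phi> x \<partial>lborel)"
proof -
  define e where "e = 4 / (dimR n - 2)"
  define Rb where "Rb = max 1 (1/a)"
  have uR: "\<Phi> x = complex_of_real (R x)" for x using real(1)[of x] by (simp add: R_def complex_eq_iff)
  have Rpos: "R x > 0" for x using real(2) by (simp add: R_def)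
  have cR: "continuous_on UNIV R" unfolding R_def by (intro continuous_intros cont)
  have H1: "\<Phi> \<in> H1" using ws by (simp add: weak_solution_def)
  have wg: "weak_grad \<Phi> (grad \<Phi>)" by (rule grad_weak[OF H1])
  have tf: "test_fun \<phi>" unfolding \<phi>_def by (rule bump_test[OF a])
  have tfi: "test_fun (partial i \<phi>)" for i unfolding \<phi>_def by (rule bump_partial_test[OF a])
  have TFphi: "\<phi> \<in> TF" unfolding \<phi>_def by (rule TF_bump)
  have cphi: "continuous_on UNIV \<phi>" by (rule TF_continuous[OF TFphi])
  have cpp: "continuous_on UNIV (partial i (partial i \<phi>))" for i
    by (intro TF_continuous TF_partial TFphi)
  have sphi: "\<phi> x = 0" if "norm x > Rb" for x
    using bump_iter_supp[OF a that[unfolded Rb_def], of "[]" 0] by (simp add: \<phi>_def)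
  have spp: "partial i (partial i \<phi>) x = 0" if "norm x > Rb" for x i
    using bump_iter_supp[OF a that[unfolded Rb_def], of "[i, i]" 0] by (simp add: \<phi>_def)
  have wgi: "integrable lborel (\<lambda>x. grad \<Phi> x $ i * of_real (partial i \<phi> x))"
    and wge: "(\<integral>x. \<Phi> x * of_real (partial i (partial i \<phi>) x) \<partial>lborel) = - (\<integral>x. grad \<Phi> x $ i * of_real (partial i \<phi> x) \<partial>lborel)"
    for i using wg tfi[of i] unfolding weak_grad_def by blast+
  define T1 where "T1 x = (\<Sum>i\<in>UNIV. grad \<Phi> x $ i * of_real (partial i \<phi> x))" for x
  define T2 where "T2 x = of_real \<omega> * \<Phi> x * of_real (\<phi> x)" for x
  define T3 where "T3 x = of_real (cmod (\<Phi> x) powr (4 / (dimR n - 2))) * \<Phi> x * of_real (\<phi> x)" for x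
  define T4 where "T4 x = g (\<Phi> x) * of_real (\<phi> x)" for x
  have eq0: "(\<integral>x. T1 x + T2 x - T3 x - T4 x \<partial>lborel) = 0"
    using ws tf unfolding weak_solution_def T1_def T2_def T3_def T4_def by blast
  have T2r: "T2 x = of_real (\<omega> * (R x * \<phi> x))" for x by (simp add: T2_def uR)
  have T3r: "T3 x = of_real (R x powr e * R x * \<phi> x)" for x
    using Rpos[of x] by (simp add: T3_def uR e_def)
  have T4r: "T4 x = of_real (gr (R x) * \<phi> x)" for x
    using Rpos[of x] by (simp add: T4_def uR gval)
  have cgr: "continuous_on UNIV (\<lambda>x. gr (R x))"
    by (rule continuous_on_compose2[OF grc cR]) (use Rpos in auto)
  have cRe: "continuous_on UNIV (\<lambda>x. R x powr e)"
    by (rule continuous_on_powr[OF cR continuous_on_const]) (use Rpos in \<open>auto simp: less_imp_neq[symmetric]\<close>)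
  have i2: "integrable lborel (\<lambda>x. R x * \<phi> x)"
    by (rule integrable_cont_supp[where R = Rb]) (use cR cphi sphi in \<open>auto intro!: continuous_intros\<close>)
  have i3: "integrable lborel (\<lambda>x. R x powr e * R x * \<phi> x)"
    by (rule integrable_cont_supp[where R = Rb]) (use cR cphi sphi cRe in \<open>auto intro!: continuous_intros\<close>)
  have i4: "integrable lborel (\<lambda>x. gr (R x) * \<phi> x)"
    by (rule integrable_cont_supp[where R = Rb]) (use cgr cphi sphi in \<open>auto intro!: continuous_intros\<close>)
  have i5: "integrable lborel (\<lambda>x. R x * partial i (partial i \<phi>) x)" for i
    by (rule integrable_cont_supp[where R = Rb]) (use cR cpp spp in \<open>auto intro!: continuous_intros\<close>)
  have iT1: "integrable lborel T1" unfolding T1_def by (intro Bochner_Integration.integrable_sum wgi)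
  have iT2: "integrable lborel T2" unfolding T2r by (intro integrable_of_real integrable_mult_right i2)
  have iT3: "integrable lborel T3" unfolding T3r by (intro integrable_of_real i3)
  have iT4: "integrable lborel T4" unfolding T4r by (intro integrable_of_real i4)
  have "(\<integral>x. T1 x + T2 x - T3 x - T4 x \<partial>lborel) = (\<integral>x. T1 x \<partial>lborel) + (\<integral>x. T2 x \<partial>lborel) - (\<integral>x. T3 x \<partial>lborel) - (\<integral>x. T4 x \<partial>lborel)"
    using iT1 iT2 iT3 iT4 by (simp add: Bochner_Integration.integral_diff Bochner_Integration.integral_add)
  moreover have "(\<integral>x. T1 x \<partial>lborel) = - of_real (\<Sum>i\<in>UNIV. \<integral>x. R x * partial i (partial i \<phi>) x \<partial>lborel)"
  proof -
    have "(\<integral>x. T1 x \<partial>lborel) = (\<Sum>i\<in>UNIV. \<integral>x. grad \<Phi> x $ i * of_real (partial i \<phi> x) \<partial>lborel)"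
      unfolding T1_def by (rule Bochner_Integration.integral_sum) (use wgi in auto)
    also have "\<dots> = (\<Sum>i\<in>UNIV. - (\<integral>x. \<Phi> x * of_real (partial i (partial i \<phi>) x) \<partial>lborel))"
    proof (rule sum.cong[OF refl])
      fix i show "(\<integral>x. grad \<Phi> x $ i * of_real (partial i \<phi> x) \<partial>lborel) = - (\<integral>x. \<Phi> x * of_real (partial i (partial i \<phi>) x) \<partial>lborel)"
        using wge[of i] by simp
    qed
    also have "\<dots> = (\<Sum>i\<in>UNIV. - of_real (\<integral>x. R x * partial i (partial i \<phi>) x \<partial>lborel))"
      by (simp add: uR flip: of_real_mult)
    finally show ?thesis by (simp add: sum_negf)
  qed
  ultimately have E: "(\<integral>x. T1 x \<partial>lborel) + (\<integral>x. T2 x \<partial>lborel) - (\<integral>x. T3 x \<partial>lborel) - (\<integral>x. T4 x \<partial>lborel) = 0"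
    and I1: "(\<integral>x. T1 x \<partial>lborel) = - of_real (\<Sum>i\<in>UNIV. \<integral>x. R x * partial i (partial i \<phi>) x \<partial>lborel)"
    using eq0 by auto
  have I2: "(\<integral>x. T2 x \<partial>lborel) = of_real (\<omega> * (\<integral>x. R x * \<phi> x \<partial>lborel))"
    unfolding T2r integral_complex_of_real by simp
  have I3: "(\<integral>x. T3 x \<partial>lborel) = of_real (\<integral>x. R x powr e * R x * \<phi> x \<partial>lborel)"
    unfolding T3r integral_complex_of_real by simp
  have I4: "(\<integral>x. T4 x \<partial>lborel) = of_real (\<integral>x. gr (R x) * \<phi> x \<partial>lborel)"
    unfolding T4r integral_complex_of_real by simp
  have "complex_of_real (- (\<Sum>i\<in>UNIV. \<integral>x. R x * partial i (partial i \<phi>) x \<partial>lborel)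
      + \<omega> * (\<integral>x. R x * \<phi> x \<partial>lborel) - (\<integral>x. R x powr e * R x * \<phi> x \<partial>lborel)
      - (\<integral>x. gr (R x) * \<phi> x \<partial>lborel)) = 0"
    using E unfolding I1 I2 I3 I4 by (simp only: of_real_add of_real_diff of_real_minus)
  then have "- (\<Sum>i\<in>UNIV. \<integral>x. R x * partial i (partial i \<phi>) x \<partial>lborel)
      + \<omega> * (\<integral>x. R x * \<phi> x \<partial>lborel) - (\<integral>x. R x powr e * R x * \<phi> x \<partial>lborel)
      - (\<integral>x. gr (R x) * \<phi> x \<partial>lborel) = 0"
    by (simp only: of_real_eq_0_iff)
  then show ?thesis unfolding e_def by linarith
qed



lemma bump_iter_integrable:
  fixes h :: "real^'n::finite \<Rightarrow> real"
  assumes h: "continuous_on UNIV h" and a: "a > 0"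
  shows "integrable lborel (\<lambda>x. h x * iter_partial is (\<lambda>x. tm m (a * (x \<bullet> x))) x)"
proof (rule integrable_cont_supp[where R = "max 1 (1/a)"])
  show "continuous_on UNIV (\<lambda>x. h x * iter_partial is (\<lambda>x::real^'n. tm m (a * (x \<bullet> x))) x)"
    by (intro continuous_intros h TF_continuous TF_iter TF_bump)
  show "h x * iter_partial is (\<lambda>x. tm m (a * (x \<bullet> x))) x = 0" if "max 1 (1/a) < norm x" for x
    using bump_iter_supp[OF a that] by simp
qed

lemma scaled_ineq:
  fixes n :: "'n::finite itself" and \<Phi> :: "real^'n \<Rightarrow> complex" and gr :: "real \<Rightarrow> real"
  assumes ws: "weak_solution n g \<omega> \<Phi>"
    and cont: "continuous_on UNIV \<Phi>"
    and real: "\<And>x. Im (\<Phi> x) = 0" "\<And>x. Re (\<Phi> x) > 0"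
    and Mle: "\<And>x. Re (\<Phi> x) \<le> M"
    and gval: "\<And>t. t > 0 \<Longrightarrow> g (complex_of_real t) = complex_of_real (gr t)"
    and grc: "continuous_on {0<..} gr"
    and grm: "\<And>s t. 0 < s \<Longrightarrow> s \<le> t \<Longrightarrow> gr s / s \<le> gr t / t"
    and d: "dimR n > 2" and c: "c > 0"
  defines "\<psi> \<equiv> (\<lambda>x::real^'n. tm 0 (1 * (x \<bullet> x)))"
  defines "S \<equiv> (\<Sum>i\<in>UNIV. \<integral>x. \<bar>partial i (partial i \<psi>) x\<bar> \<partial>lborel)"
  shows "(\<omega> - (M powr (4 / (dimR n - 2)) + gr M / M)) * (\<integral>x. Re (\<Phi> ((1/c) *\<^sub>R x)) * \<psi> x \<partial>lborel)
           \<le> M * c^2 * S"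
proof -
  define e where "e = 4 / (dimR n - 2)"
  have e: "e > 0" using d by (simp add: e_def)
  define R where "R x = Re (\<Phi> x)" for x
  have Rpos: "R x > 0" for x using real(2) by (simp add: R_def)
  have RM: "R x \<le> M" for x using Mle by (simp add: R_def)
  have M: "M > 0" using Rpos[of 0] RM[of 0] by simp
  have cR: "continuous_on UNIV R" unfolding R_def by (intro continuous_intros cont)
  define a where "a = c * c"
  have a: "a > 0" using c by (simp add: a_def)
  define \<phi> where "\<phi> = (\<lambda>x::real^'n. tm 0 (a * (x \<bullet> x)))"
  have ident: "\<omega> * (\<integral>x. R x * \<phi> x \<partial>lborel) =
           (\<Sum>i\<in>UNIV. \<integral>x. R x * partial i (partial i \<phi>) x \<partial>lborel)
           + (\<integral>x. R x powr e * R x * \<phi> x \<partial>lborel)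
           + (\<integral>x. gr (R x) * \<phi> x \<partial>lborel)"
    using weak_identity[OF ws cont real gval grc a] unfolding R_def \<phi>_def e_def by simp
  have cgr: "continuous_on UNIV (\<lambda>x. gr (R x))"
    by (rule continuous_on_compose2[OF grc cR]) (use Rpos in auto)
  have cRe: "continuous_on UNIV (\<lambda>x. R x powr e)"
    by (rule continuous_on_powr[OF cR continuous_on_const]) (use Rpos in \<open>auto simp: less_imp_neq[symmetric]\<close>)
  have ib: "integrable lborel (\<lambda>x. h x * iter_partial is \<phi> x)" if "continuous_on UNIV h" for h "is"
    unfolding \<phi>_def by (rule bump_iter_integrable[OF that a])
  have ipp: "integrable lborel (\<lambda>x. h x * partial i (partial i \<phi>) x)" if "continuous_on UNIV h" for h i
    using ib[OF that, of "[i,i]"] by simp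
  have iphi: "integrable lborel (\<lambda>x. h x * \<phi> x)" if "continuous_on UNIV h" for h
    using ib[OF that, of "[]"] by simp
  have iRphi: "integrable lborel (\<lambda>x. R x * \<phi> x)" by (rule iphi[OF cR])
  have phinn: "\<phi> x \<ge> 0" for x by (simp add: \<phi>_def tm_nonneg)
  have in1: "(\<integral>x. R x * partial i (partial i \<phi>) x \<partial>lborel) \<le> M * (\<integral>x. \<bar>partial i (partial i \<phi>) x\<bar> \<partial>lborel)" for i
  proof -
    have iabs: "integrable lborel (\<lambda>x. \<bar>partial i (partial i \<phi>) x\<bar>)"
      using integrable_abs[OF ipp[OF continuous_on_const, of 1 i]] by simp
    have "(\<integral>x. R x * partial i (partial i \<phi>) x \<partial>lborel) \<le> (\<integral>x. M * \<bar>partial i (partial i \<phi>) x\<bar> \<partial>lborel)"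
    proof (rule integral_mono[OF ipp[OF cR]])
      show "integrable lborel (\<lambda>x. M * \<bar>partial i (partial i \<phi>) x\<bar>)" by (intro integrable_mult_right iabs)
      fix x
      have "R x * partial i (partial i \<phi>) x \<le> R x * \<bar>partial i (partial i \<phi>) x\<bar>"
        using Rpos[of x] by (intro mult_left_mono) auto
      also have "\<dots> \<le> M * \<bar>partial i (partial i \<phi>) x\<bar>" using RM[of x] by (intro mult_right_mono) auto
      finally show "R x * partial i (partial i \<phi>) x \<le> M * \<bar>partial i (partial i \<phi>) x\<bar>" .
    qed
    then show ?thesis by simp
  qed
  have in2: "(\<integral>x. R x powr e * R x * \<phi> x \<partial>lborel) \<le> M powr e * (\<integral>x. R x * \<phi> x \<partial>lborel)"
  proof -
    have "(\<integral>x. R x powr e * R x * \<phi> x \<partial>lborel) \<le> (\<integral>x. M powr e * (R x * \<phi> x) \<partial>lborel)"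
    proof (rule integral_mono)
      show "integrable lborel (\<lambda>x. R x powr e * R x * \<phi> x)"
        by (rule iphi[of "\<lambda>x. R x powr e * R x"]) (intro continuous_intros cRe cR)
      show "integrable lborel (\<lambda>x. M powr e * (R x * \<phi> x))" by (intro integrable_mult_right iRphi)
      fix x
      have "R x powr e \<le> M powr e" using Rpos[of x] RM[of x] e by (intro powr_mono2) auto
      then show "R x powr e * R x * \<phi> x \<le> M powr e * (R x * \<phi> x)"
        using Rpos[of x] phinn[of x] by (simp add: mult.assoc mult_right_mono mult_nonneg_nonneg)
    qed
    then show ?thesis by simp
  qed
  have in3: "(\<integral>x. gr (R x) * \<phi> x \<partial>lborel) \<le> (gr M / M) * (\<integral>x. R x * \<phi> x \<partial>lborel)"
  proof -
    have "(\<integral>x. gr (R x) * \<phi> x \<partial>lborel) \<le> (\<integral>x. (gr M / M) * (R x * \<phi> x) \<partial>lborel)"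
    proof (rule integral_mono)
      show "integrable lborel (\<lambda>x. gr (R x) * \<phi> x)" by (rule iphi[OF cgr])
      show "integrable lborel (\<lambda>x. (gr M / M) * (R x * \<phi> x))" by (intro integrable_mult_right iRphi)
      fix x
      have "gr (R x) / R x \<le> gr M / M" by (rule grm[OF Rpos RM])
      then have "gr (R x) \<le> (gr M / M) * R x" using Rpos[of x] by (simp add: divide_le_eq mult.commute)
      then have "gr (R x) * \<phi> x \<le> ((gr M / M) * R x) * \<phi> x"
        using phinn[of x] by (rule mult_right_mono)
      then show "gr (R x) * \<phi> x \<le> (gr M / M) * (R x * \<phi> x)"
        by (simp only: mult.assoc)
    qed
    then show ?thesis by simp
  qed
  have main: "\<omega> * (\<integral>x. R x * \<phi> x \<partial>lborel) \<le> M * (\<Sum>i\<in>UNIV. \<integral>x. \<bar>partial i (partial i \<phi>) x\<bar> \<partial>lborel)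
              + (M powr e + gr M / M) * (\<integral>x. R x * \<phi> x \<partial>lborel)"
  proof -
    have "(\<Sum>i\<in>UNIV. \<integral>x. R x * partial i (partial i \<phi>) x \<partial>lborel) \<le> (\<Sum>i\<in>UNIV. M * (\<integral>x. \<bar>partial i (partial i \<phi>) x\<bar> \<partial>lborel))"
      by (rule sum_mono) (rule in1)
    then show ?thesis using ident in2 in3 by (simp add: sum_distrib_left distrib_right)
  qed
  have TFpsi: "\<psi> \<in> TF" unfolding \<psi>_def by (rule TF_bump)
  have phi_eq: "\<phi> = (\<lambda>y. \<psi> (c *\<^sub>R y))" by (simp add: \<phi>_def \<psi>_def a_def fun_eq_iff algebra_simps)
  have pp: "partial i (partial i \<phi>) = (\<lambda>y. c * (c * partial i (partial i \<psi>) (c *\<^sub>R y)))" for i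
  proof -
    have "partial i \<phi> = (\<lambda>y. c * partial i \<psi> (c *\<^sub>R y))"
      unfolding phi_eq by (rule partial_scale) (rule TF_differentiable[OF TFpsi])
    moreover have dif: "(\<lambda>y. partial i \<psi> (c *\<^sub>R y)) differentiable (at x)" for x
    proof -
      have "(partial i \<psi>) differentiable (at (c *\<^sub>R x))" by (intro TF_differentiable TF_partial TFpsi)
      moreover have "(\<lambda>y::real^'n. c *\<^sub>R y) differentiable (at x)" by (auto intro!: derivative_eq_intros simp: differentiable_def)
      ultimately show ?thesis using differentiable_chain_at[of "\<lambda>y::real^'n. c *\<^sub>R y" x "partial i \<psi>"] by (simp add: o_def)
    qed
    ultimately have "partial i (partial i \<phi>) = (\<lambda>y. c * partial i (\<lambda>y. partial i \<psi> (c *\<^sub>R y)) y)"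
      using partial_cmult[OF dif] by simp
    also have "\<dots> = (\<lambda>y. c * (c * partial i (partial i \<psi>) (c *\<^sub>R y)))"
      by (subst partial_scale) (auto intro: TF_differentiable TF_partial TFpsi)
    finally show ?thesis .
  qed
  have cpp: "continuous_on UNIV (partial i (partial i \<psi>))" for i by (intro TF_continuous TF_partial TFpsi)
  have intpp: "(\<integral>x. \<bar>partial i (partial i \<phi>) x\<bar> \<partial>lborel) = c^2 * ((1 / c ^ DIM(real^'n)) * (\<integral>x. \<bar>partial i (partial i \<psi>) x\<bar> \<partial>lborel))" for i
  proof -
    have "(\<integral>x. \<bar>partial i (partial i \<phi>) x\<bar> \<partial>lborel) = (\<integral>x. c^2 * \<bar>partial i (partial i \<psi>) (c *\<^sub>R x)\<bar> \<partial>lborel)"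
      unfolding pp using c by (simp add: abs_mult power2_eq_square)
    also have "\<dots> = c^2 * (\<integral>x. \<bar>partial i (partial i \<psi>) (c *\<^sub>R x)\<bar> \<partial>lborel)" by simp
    also have "(\<integral>x. \<bar>partial i (partial i \<psi>) (c *\<^sub>R x)\<bar> \<partial>lborel) = (1 / c ^ DIM(real^'n)) *\<^sub>R (\<integral>x. \<bar>partial i (partial i \<psi>) x\<bar> \<partial>lborel)"
      by (rule lborel_scale_integral[OF c, where f = "\<lambda>x. \<bar>partial i (partial i \<psi>) x\<bar>"])
         (intro borel_measurable_continuous_onI continuous_intros cpp)
    finally show ?thesis by simp
  qed
  define F where "F x = Re (\<Phi> ((1/c) *\<^sub>R x)) * \<psi> x" for x
  have cF: "continuous_on UNIV F" unfolding F_def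
    by (intro continuous_intros continuous_on_compose2[OF cont] TF_continuous[OF TFpsi]) auto
  have intF: "(\<integral>x. R x * \<phi> x \<partial>lborel) = (1 / c ^ DIM(real^'n)) * (\<integral>x. F x \<partial>lborel)"
  proof -
    have "(\<integral>x. R x * \<phi> x \<partial>lborel) = (\<integral>x. F (c *\<^sub>R x) \<partial>lborel)"
      using c by (simp add: F_def R_def phi_eq)
    also have "\<dots> = (1 / c ^ DIM(real^'n)) *\<^sub>R (\<integral>x. F x \<partial>lborel)"
      by (rule lborel_scale_integral[OF c]) (rule borel_measurable_continuous_onI[OF cF])
    finally show ?thesis by simp
  qed
  define K where "K = 1 / c ^ DIM(real^'n)"
  have K: "K > 0" using c by (simp add: K_def)
  have "\<omega> * (K * (\<integral>x. F x \<partial>lborel)) \<le> M * (\<Sum>i\<in>UNIV. c^2 * (K * (\<integral>x. \<bar>partial i (partial i \<psi>) x\<bar> \<partial>lborel)))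
              + (M powr e + gr M / M) * (K * (\<integral>x. F x \<partial>lborel))"
    using main unfolding intpp intF K_def by simp
  then have "K * ((\<omega> - (M powr e + gr M / M)) * (\<integral>x. F x \<partial>lborel)) \<le> K * (M * c^2 * S)"
    unfolding S_def by (simp add: sum_distrib_left algebra_simps)
  then have "(\<omega> - (M powr e + gr M / M)) * (\<integral>x. F x \<partial>lborel) \<le> M * c^2 * S"
    using K by simp
  then show ?thesis unfolding F_def e_def by simp
qed



lemma integral_pos_ball:
  fixes f :: "'a::euclidean_space \<Rightarrow> real"
  assumes i: "integrable lborel f" and nn: "\<And>x. f x \<ge> 0" and pos: "\<And>x. x \<in> ball 0 1 \<Longrightarrow> f x > 0"
  shows "(\<integral>x. f x \<partial>lborel) > 0"
proof -
  have ge: "(\<integral>x. f x \<partial>lborel) \<ge> 0" using nn by simp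
  have "(\<integral>x. f x \<partial>lborel) \<noteq> 0"
  proof
    assume "(\<integral>x. f x \<partial>lborel) = 0"
    then have "AE x in lborel. f x = 0" using integral_nonneg_eq_0_iff_AE[OF i] nn by simp
    then have "AE x in lborel. x \<notin> ball (0::'a) 1" by eventually_elim (use pos in force)
    then have "emeasure lborel (ball (0::'a) 1) = 0"
      by (subst (asm) AE_iff_measurable[where N = "ball 0 1"]) auto
    then have "measure lborel (ball (0::'a) 1) = 0" by (simp add: measure_def)
    then show False using content_ball_pos[of 1 "0::'a"] by simp
  qed
  then show ?thesis using ge by simp
qed

lemma rinner_real: "rinner (\<lambda>x. complex_of_real (f x)) (\<lambda>x. complex_of_real (h x)) = (\<integral>x. f x * h x \<partial>lborel)"
  unfolding rinner_def by (simp flip: of_real_mult)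

lemma TT_eq:
  fixes n :: "'n::finite itself"
  assumes mu: "mu > 0" and M: "M > 0"
  shows "Tscale n mu (Tscale n M v) x = v (((mu * M) powr (- 2 / (dimR n - 2))) *\<^sub>R x) / complex_of_real (mu * M)"
  unfolding Tscale_def using mu M by (simp add: powr_mult mult.commute)



lemma bump_integrable0:
  fixes h :: "real^'n::finite \<Rightarrow> real"
  assumes h: "continuous_on UNIV h" and a: "a > 0"
  shows "integrable lborel (\<lambda>x. h x * tm m (a * (x \<bullet> x)))"
  using bump_iter_integrable[OF h a, of "[]"] by simp

lemma small_big: "(t::real) \<ge> 0 \<Longrightarrow> \<epsilon> > 0 \<Longrightarrow> t \<le> \<epsilon> + t powr 4 / \<epsilon>^3"
proof -
  assume t: "t \<ge> 0" and e: "\<epsilon> > 0"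
  show ?thesis
  proof (cases "t \<le> \<epsilon>")
    case True then show ?thesis using e by (simp add: add_increasing2)
  next
    case False
    then have tp: "t > \<epsilon>" "t > 0" using e by auto
    have p4: "t powr 4 = t^4" using powr_realpow[OF tp(2), of 4] by simp
    have "t * \<epsilon>^3 \<le> t * t^3" using tp e by (intro mult_left_mono power_mono) auto
    also have "t * t^3 = t^4" by (simp add: eval_nat_numeral)
    finally have "t * \<epsilon>^3 \<le> t powr 4" using p4 by simp
    then have "t \<le> t powr 4 / \<epsilon>^3" using e by (simp add: le_divide_eq)
    then show ?thesis using e by simp
  qed
qed

lemma J_to0:
  fixes \<zeta> :: "real \<Rightarrow> real^'n::finite \<Rightarrow> complex"
  assumes cz: "\<forall>\<^sub>F \<omega> in at_top. continuous_on UNIV (\<zeta> \<omega>)"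
    and Lp: "((\<lambda>\<omega>. Lp_norm_pow 4 (\<zeta> \<omega>)) \<longlongrightarrow> 0) at_top"
  defines "\<psi> \<equiv> (\<lambda>x::real^'n. tm 0 (1 * (x \<bullet> x)))"
  shows "((\<lambda>\<omega>. \<integral>x. cmod (\<zeta> \<omega> x) * \<psi> x \<partial>lborel) \<longlongrightarrow> 0) at_top"
  unfolding tendsto_iff
proof (intro allI impI)
  fix \<delta> :: real assume \<delta>: "\<delta> > 0"
  have ipsi: "integrable lborel \<psi>"
    using bump_integrable0[OF continuous_on_const, of 1 1 0] by (simp add: \<psi>_def)
  have psinn: "\<psi> x \<ge> 0" "\<psi> x \<le> 1" for x by (simp_all add: \<psi>_def tm_nonneg tm0_le1)
  define P where "P = (\<integral>x. \<psi> x \<partial>lborel)"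
  have P: "P \<ge> 0" unfolding P_def using psinn by simp
  define \<epsilon> where "\<epsilon> = \<delta> / (2 * (P + 1))"
  have e: "\<epsilon> > 0" using \<delta> P by (simp add: \<epsilon>_def)
  have eP: "\<epsilon> * P < \<delta> / 2"
  proof -
    have "\<epsilon> * P = \<delta> / 2 * (P / (P + 1))" using P by (simp add: \<epsilon>_def field_simps)
    also have "\<dots> < \<delta> / 2" using P \<delta> by (simp add: field_simps)
    finally show ?thesis .
  qed
  define \<eta> where "\<eta> = \<epsilon>^3 * \<delta> / 4"
  have \<eta>: "\<eta> > 0" using e \<delta> by (simp add: \<eta>_def)
  have ev: "\<forall>\<^sub>F \<omega> in at_top. Lp_norm_pow 4 (\<zeta> \<omega>) < ennreal \<eta>"
    using order_tendstoD(2)[OF Lp, of "ennreal \<eta>"] \<eta> by simp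
  show "\<forall>\<^sub>F \<omega> in at_top. dist (\<integral>x. cmod (\<zeta> \<omega> x) * \<psi> x \<partial>lborel) 0 < \<delta>"
    using ev cz
  proof eventually_elim
    case (elim \<omega>)
    define z where "z = \<zeta> \<omega>"
    have cz': "continuous_on UNIV z" using elim by (simp add: z_def)
    have c1: "continuous_on UNIV (\<lambda>x. cmod (z x))" by (intro continuous_intros cz')
    have c4: "continuous_on UNIV (\<lambda>x. cmod (z x) powr 4)"
      by (rule continuous_on_powr'[OF c1 continuous_on_const]) auto
    have i1: "integrable lborel (\<lambda>x. cmod (z x) * \<psi> x)"
      using bump_integrable0[OF c1, of 1 0] by (simp add: \<psi>_def)
    have i4: "integrable lborel (\<lambda>x. cmod (z x) powr 4 * \<psi> x)"
      using bump_integrable0[OF c4, of 1 0] by (simp add: \<psi>_def)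
    have J0: "(\<integral>x. cmod (z x) * \<psi> x \<partial>lborel) \<ge> 0" using psinn by simp
    have "(\<integral>x. cmod (z x) * \<psi> x \<partial>lborel) \<le> (\<integral>x. \<epsilon> * \<psi> x + (cmod (z x) powr 4 * \<psi> x) / \<epsilon>^3 \<partial>lborel)"
    proof (rule integral_mono[OF i1])
      show "integrable lborel (\<lambda>x. \<epsilon> * \<psi> x + (cmod (z x) powr 4 * \<psi> x) / \<epsilon>^3)"
        by (intro Bochner_Integration.integrable_add integrable_mult_right integrable_divide ipsi i4)
      fix x
      have "cmod (z x) \<le> \<epsilon> + cmod (z x) powr 4 / \<epsilon>^3" by (rule small_big[OF norm_ge_zero e])
      then have "cmod (z x) * \<psi> x \<le> (\<epsilon> + cmod (z x) powr 4 / \<epsilon>^3) * \<psi> x"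
        using psinn(1)[of x] by (rule mult_right_mono)
      then show "cmod (z x) * \<psi> x \<le> \<epsilon> * \<psi> x + (cmod (z x) powr 4 * \<psi> x) / \<epsilon>^3"
        by (simp add: algebra_simps)
    qed
    also have "\<dots> = \<epsilon> * P + (\<integral>x. cmod (z x) powr 4 * \<psi> x \<partial>lborel) / \<epsilon>^3"
      using ipsi i4 by (simp add: P_def)
    also have "(\<integral>x. cmod (z x) powr 4 * \<psi> x \<partial>lborel) \<le> \<eta>"
    proof -
      have m4: "(\<lambda>x. cmod (z x) powr 4 * \<psi> x) \<in> borel_measurable lborel"
        using borel_measurable_integrable[OF i4] .
      have A: "(\<integral>x. cmod (z x) powr 4 * \<psi> x \<partial>lborel) = enn2real (\<integral>\<^sup>+x. ennreal (cmod (z x) powr 4 * \<psi> x) \<partial>lborel)"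
        by (rule integral_eq_nn_integral[OF m4]) (use psinn in auto)
      have B1: "(\<integral>\<^sup>+x. ennreal (cmod (z x) powr 4 * \<psi> x) \<partial>lborel) \<le> Lp_norm_pow 4 z"
        unfolding Lp_norm_pow_def
      proof (rule nn_integral_mono)
        fix x
        have "cmod (z x) powr 4 * \<psi> x \<le> cmod (z x) powr 4" using psinn[of x] by (simp add: mult_left_le)
        then show "ennreal (cmod (z x) powr 4 * \<psi> x) \<le> ennreal (cmod (z x) powr 4)" by (rule ennreal_leI)
      qed
      have B2: "Lp_norm_pow 4 z \<le> ennreal \<eta>" using elim by (simp add: z_def)
      have "enn2real (\<integral>\<^sup>+x. ennreal (cmod (z x) powr 4 * \<psi> x) \<partial>lborel) \<le> \<eta>"
        by (rule enn2real_leI) (use \<eta> B1 B2 in auto)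
      then show ?thesis unfolding A .
    qed
    then have "\<epsilon> * P + (\<integral>x. cmod (z x) powr 4 * \<psi> x \<partial>lborel) / \<epsilon>^3 \<le> \<epsilon> * P + \<eta> / \<epsilon>^3"
      using e by (simp add: divide_right_mono)
    also have "\<eta> / \<epsilon>^3 = \<delta> / 4" using e by (simp add: \<eta>_def)
    finally have "(\<integral>x. cmod (z x) * \<psi> x \<partial>lborel) \<le> \<epsilon> * P + \<delta> / 4" .
    then have "(\<integral>x. cmod (z x) * \<psi> x \<partial>lborel) < \<delta>" using eP \<delta> by linarith
    then show ?case using J0 by (simp add: z_def dist_real_def)
  qed
qed



lemma zeta_cont:
  assumes cont: "continuous_on UNIV (\<Phi> \<omega>)" and mu: "\<mu> \<omega> > 0" and pk: "peak (\<Phi> \<omega>) > 0"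
    and d: "dimR n > 2"
  shows "continuous_on UNIV (zeta n \<Phi> \<mu> \<omega>)"
proof -
  have "zeta n \<Phi> \<mu> \<omega> = (\<lambda>x. \<Phi> \<omega> (((\<mu> \<omega> * peak (\<Phi> \<omega>)) powr (- 2 / (dimR n - 2))) *\<^sub>R x) / complex_of_real (\<mu> \<omega> * peak (\<Phi> \<omega>)) - complex_of_real (W n x))"
    by (auto simp: fun_eq_iff zeta_def TT_eq[OF mu pk])
  moreover have "continuous_on UNIV (\<lambda>x. \<Phi> \<omega> (((\<mu> \<omega> * peak (\<Phi> \<omega>)) powr (- 2 / (dimR n - 2))) *\<^sub>R x))"
    by (rule continuous_on_compose2[OF cont]) (auto intro!: continuous_intros)
  ultimately show ?thesis using mu pk continuous_W[OF d]
    by (simp only:) (intro continuous_intros, auto)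
qed

lemma lam_to_infty:
  fixes n :: "'n::finite itself" and \<Phi> :: "real \<Rightarrow> real^'n \<Rightarrow> complex" and gr :: "real \<Rightarrow> real"
  assumes d: "dimR n > 2"
    and gs: "\<And>\<omega>. \<omega> > 0 \<Longrightarrow> weak_solution n g \<omega> (\<Phi> \<omega>) \<and> continuous_on UNIV (\<Phi> \<omega>) \<and>
              (\<forall>x. Im (\<Phi> \<omega> x) = 0 \<and> Re (\<Phi> \<omega> x) > 0) \<and>
              (\<forall>x y. norm x < norm y \<longrightarrow> Re (\<Phi> \<omega> y) < Re (\<Phi> \<omega> x))"
    and gval: "\<And>t. t > 0 \<Longrightarrow> g (complex_of_real t) = complex_of_real (gr t)"
    and grc: "continuous_on {0<..} gr"
    and grm: "\<And>s t. 0 < s \<Longrightarrow> s \<le> t \<Longrightarrow> gr s / s \<le> gr t / t"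
    and \<omega>1: "\<omega>1 > 0" and mu_pos: "\<And>\<omega>. \<omega> > \<omega>1 \<Longrightarrow> \<mu> \<omega> > 0"
    and mu_lim: "(\<mu> \<longlongrightarrow> 1) at_top"
    and Lp: "((\<lambda>\<omega>. Lp_norm_pow 4 (zeta n \<Phi> \<mu> \<omega>)) \<longlongrightarrow> 0) at_top"
  shows "filterlim (\<lambda>\<omega>. \<mu> \<omega> * peak (\<Phi> \<omega>)) at_top at_top"
proof -
  define \<psi> where "\<psi> = (\<lambda>x::real^'n. tm 0 (1 * (x \<bullet> x)))"
  define S where "S = (\<Sum>i\<in>UNIV. \<integral>x. \<bar>partial i (partial i \<psi>) x\<bar> \<partial>lborel)"
  have S: "S \<ge> 0" unfolding S_def by (intro sum_nonneg) simp
  define I0 where "I0 = (\<integral>x. W n x * \<psi> x \<partial>lborel)"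
  have psinn: "\<psi> x \<ge> 0" for x by (simp add: \<psi>_def tm_nonneg)
  have cW: "continuous_on UNIV (W n)" by (rule continuous_W[OF d])
  have iWpsi: "integrable lborel (\<lambda>x. W n x * \<psi> x)"
    unfolding \<psi>_def by (rule bump_integrable0[OF cW]) simp
  have I0: "I0 > 0" unfolding I0_def
  proof (rule integral_pos_ball[OF iWpsi])
    show "0 \<le> W n x * \<psi> x" for x using W_pos[OF d, of x] psinn[of x] by simp
    fix x :: "real^'n" assume "x \<in> ball 0 1"
    then have "norm x < 1" by simp
    then have "x \<bullet> x < 1" by (simp add: power2_norm_eq_inner[symmetric] power_less_one_iff abs_square_less_1)
    then have "\<psi> x > 0" by (simp add: \<psi>_def tm0_pos)
    then show "0 < W n x * \<psi> x" using W_pos[OF d, of x] by simp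
  qed
  have pk_pos: "peak (\<Phi> \<omega>) > 0" if "\<omega> > 0" for \<omega> using gs[OF that] by (simp add: peak_def)
  have Jlim: "((\<lambda>\<omega>. \<integral>x. cmod (zeta n \<Phi> \<mu> \<omega> x) * \<psi> x \<partial>lborel) \<longlongrightarrow> 0) at_top"
    unfolding \<psi>_def
  proof (rule J_to0[OF _ Lp])
    show "\<forall>\<^sub>F \<omega> in at_top. continuous_on UNIV (zeta n \<Phi> \<mu> \<omega>)"
      using eventually_gt_at_top[of \<omega>1]
    proof eventually_elim
      case (elim \<omega>)
      then have w0: "\<omega> > 0" using \<omega>1 by simp
      then show ?case using zeta_cont[where \<Phi>=\<Phi> and \<omega>=\<omega> and \<mu>=\<mu> and n=n, OF _ mu_pos[OF elim] pk_pos[OF w0] d] gs[OF w0] by blast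
    qed
  qed
  define a where "a = 2 / (dimR n - 2)"
  define e where "e = 4 / (dimR n - 2)"
  have a: "a > 0" and e: "e > 0" using d by (auto simp: a_def e_def)
  show ?thesis unfolding filterlim_at_top
  proof
    fix Z :: real
    define K where "K = max Z 1"
    have K: "K \<ge> 1" "K \<ge> Z" by (auto simp: K_def)
    define B where "B = (2*K) powr e + gr (2*K) / (2*K) + 4 * K powr (2*a) * S / I0"
    have ev1: "\<forall>\<^sub>F \<omega> in at_top. \<mu> \<omega> > 1/2" using order_tendstoD(1)[OF mu_lim, of "1/2"] by simp
    have ev2: "\<forall>\<^sub>F \<omega> in at_top. (\<integral>x. cmod (zeta n \<Phi> \<mu> \<omega> x) * \<psi> x \<partial>lborel) < I0 / 2"
      using order_tendstoD(2)[OF Jlim, of "I0/2"] I0 by simp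
    show "\<forall>\<^sub>F \<omega> in at_top. Z \<le> \<mu> \<omega> * peak (\<Phi> \<omega>)"
      using ev1 ev2 eventually_gt_at_top[of "max \<omega>1 B"]
    proof eventually_elim
      case (elim \<omega>)
      have w1: "\<omega> > \<omega>1" and wB: "\<omega> > B" using elim by auto
      have w0: "\<omega> > 0" using w1 \<omega>1 by simp
      have mu: "\<mu> \<omega> > 1/2" using elim by simp
      have J: "(\<integral>x. cmod (zeta n \<Phi> \<mu> \<omega> x) * \<psi> x \<partial>lborel) < I0 / 2" using elim by simp
      show "Z \<le> \<mu> \<omega> * peak (\<Phi> \<omega>)"
      proof (rule ccontr)
        assume "\<not> Z \<le> \<mu> \<omega> * peak (\<Phi> \<omega>)"
        then have lK: "\<mu> \<omega> * peak (\<Phi> \<omega>) < K" using K by simp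
        define P where "P = \<Phi> \<omega>"
        define M where "M = peak P"
        define l where "l = \<mu> \<omega> * M"
        define c where "c = l powr a"
        have gsP: "weak_solution n g \<omega> P" "continuous_on UNIV P"
          "\<And>x. Im (P x) = 0" "\<And>x. Re (P x) > 0" "\<And>x y. norm x < norm y \<Longrightarrow> Re (P y) < Re (P x)"
          using gs[OF w0] by (auto simp: P_def)
        have M: "M > 0" using pk_pos[OF w0] by (simp add: M_def P_def)
        have Mle: "Re (P x) \<le> M" for x
        proof (cases "x = 0")
          case True then show ?thesis by (simp add: M_def peak_def)
        next
          case False then have "norm 0 < norm x" by simp
          from gsP(5)[OF this] show ?thesis by (simp add: M_def peak_def)
        qed
        have l: "l > 0" using M mu by (simp add: l_def)
        have lK': "l < K" using lK by (simp add: l_def M_def P_def)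
        have c: "c > 0" using l by (simp add: c_def)
        have ineq: "(\<omega> - (M powr e + gr M / M)) * (\<integral>x. Re (P ((1/c) *\<^sub>R x)) * \<psi> x \<partial>lborel) \<le> M * c^2 * S"
          using scaled_ineq[OF gsP(1,2,3,4) Mle gval grc grm d c] unfolding \<psi>_def S_def e_def by simp
        define z where "z = zeta n \<Phi> \<mu> \<omega>"
        have mu0: "\<mu> \<omega> > 0" using mu by simp
        have rel: "Re (P ((1/c) *\<^sub>R x)) = l * (W n x + Re (z x))" for x
        proof -
          have ic: "1 / c = l powr (- 2 / (dimR n - 2))"
          proof -
            have "- 2 / (dimR n - 2) = - a" unfolding a_def by simp
            moreover have "l powr (- a) = 1 / c" unfolding c_def by (rule powr_minus_divide)
            ultimately show ?thesis by simp
          qed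
          have "z x = P ((1/c) *\<^sub>R x) / complex_of_real l - complex_of_real (W n x)"
            unfolding z_def zeta_def TT_eq[OF mu0 M[unfolded M_def P_def]] ic
            by (simp add: l_def M_def P_def)
          then have "P ((1/c) *\<^sub>R x) = complex_of_real l * (z x + complex_of_real (W n x))"
            using l by (simp add: field_simps)
          then show ?thesis by simp
        qed
        have cz: "continuous_on UNIV z" unfolding z_def
          by (rule zeta_cont[where \<Phi>=\<Phi> and \<omega>=\<omega> and \<mu>=\<mu> and n=n, OF _ mu0 _ d]) (use gsP M in \<open>auto simp: P_def M_def\<close>)
        have cRz: "continuous_on UNIV (\<lambda>x. Re (z x))" by (intro continuous_intros cz)
        have cmz: "continuous_on UNIV (\<lambda>x. cmod (z x))" by (intro continuous_intros cz)
        have iRz: "integrable lborel (\<lambda>x. Re (z x) * \<psi> x)"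
          unfolding \<psi>_def by (rule bump_integrable0[OF cRz]) simp
        have imz: "integrable lborel (\<lambda>x. cmod (z x) * \<psi> x)"
          unfolding \<psi>_def by (rule bump_integrable0[OF cmz]) simp
        define X where "X = (\<integral>x. Re (P ((1/c) *\<^sub>R x)) * \<psi> x \<partial>lborel)"
        have X_eq: "X = l * (I0 + (\<integral>x. Re (z x) * \<psi> x \<partial>lborel))"
        proof -
          have "X = (\<integral>x. l * (W n x * \<psi> x + Re (z x) * \<psi> x) \<partial>lborel)"
            unfolding X_def rel by (simp add: algebra_simps)
          also have "\<dots> = l * (I0 + (\<integral>x. Re (z x) * \<psi> x \<partial>lborel))"
            using iWpsi iRz by (simp add: I0_def)
          finally show ?thesis .
        qed
        have "(\<integral>x. Re (z x) * \<psi> x \<partial>lborel) \<ge> - (\<integral>x. cmod (z x) * \<psi> x \<partial>lborel)"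
        proof -
          have "(\<integral>x. - (cmod (z x) * \<psi> x) \<partial>lborel) \<le> (\<integral>x. Re (z x) * \<psi> x \<partial>lborel)"
          proof (rule integral_mono)
            show "integrable lborel (\<lambda>x. - (cmod (z x) * \<psi> x))" using imz by simp
            show "integrable lborel (\<lambda>x. Re (z x) * \<psi> x)" by (rule iRz)
            fix x
            have "- cmod (z x) \<le> Re (z x)" using abs_Re_le_cmod[of "z x"] by linarith
            then have "(- cmod (z x)) * \<psi> x \<le> Re (z x) * \<psi> x"
              using psinn[of x] by (rule mult_right_mono)
            then show "- (cmod (z x) * \<psi> x) \<le> Re (z x) * \<psi> x" by simp
          qed
          then show ?thesis by simp
        qed
        then have "I0 + (\<integral>x. Re (z x) * \<psi> x \<partial>lborel) \<ge> I0 / 2" using J unfolding z_def by linarith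
        then have Xge: "X \<ge> l * (I0 / 2)" unfolding X_eq using l by (intro mult_left_mono) auto
        have M2K: "M \<le> 2 * K"
        proof -
          have "M = l / \<mu> \<omega>" using mu0 by (simp add: l_def)
          also have "\<dots> \<le> l / (1/2)" using mu l by (intro divide_left_mono) auto
          also have "\<dots> \<le> 2 * K" using lK' by simp
          finally show ?thesis .
        qed
        have A_le: "M powr e + gr M / M \<le> (2*K) powr e + gr (2*K) / (2*K)"
          using powr_mono2[of e M "2*K"] e M M2K grm[OF M M2K] by simp
        have c2: "c^2 \<le> K powr (2*a)"
        proof -
          have "c^2 = c powr 2" using powr_realpow[OF c, of 2] by simp
          also have "c powr 2 = l powr (a * 2)" unfolding c_def by (rule powr_powr)
          also have "a * 2 = 2 * a" by simp
          finally have "c^2 = l powr (2*a)" .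
          also have "\<dots> \<le> K powr (2*a)" using l lK' a by (intro powr_mono2) auto
          finally show ?thesis .
        qed
        have extra: "4 * K powr (2*a) * S / I0 \<ge> 0" using S I0 by simp
        have "\<omega> \<le> B"
        proof (cases "\<omega> \<le> M powr e + gr M / M")
          case True then show ?thesis using A_le extra unfolding B_def by linarith
        next
          case False
          then have pos: "\<omega> - (M powr e + gr M / M) > 0" by simp
          have "(\<omega> - (M powr e + gr M / M)) * (l * (I0 / 2)) \<le> (\<omega> - (M powr e + gr M / M)) * X"
            using Xge pos by (intro mult_left_mono) auto
          also have "\<dots> \<le> M * c^2 * S" using ineq unfolding X_def .
          finally have "(\<omega> - (M powr e + gr M / M)) * (l * (I0 / 2)) \<le> M * c^2 * S" .
          then have "\<omega> - (M powr e + gr M / M) \<le> M * c^2 * S / (l * (I0 / 2))"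
            using l I0 by (simp add: le_divide_eq mult.commute)
          also have "M * c^2 * S / (l * (I0 / 2)) = 2 * c^2 * S / (\<mu> \<omega> * I0)"
            using M mu0 I0 by (simp add: l_def field_simps)
          also have "\<dots> \<le> 2 * c^2 * S / ((1/2) * I0)"
            using mu I0 S by (intro divide_left_mono mult_right_mono mult_pos_pos) auto
          also have "\<dots> = 4 * c^2 * S / I0" by simp
          also have "\<dots> \<le> 4 * K powr (2*a) * S / I0"
            using c2 S I0 by (intro divide_right_mono mult_right_mono mult_left_mono) auto
          finally show ?thesis using A_le unfolding B_def by linarith
        qed
        then show False using wB by simp
      qed
    qed
  qed
qed



theorem lemma4p7:
  fixes n :: "'n::finite itself"
    and g :: "complex \<Rightarrow> complex"
    and p1 p2 C1 C2 C3 :: real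
    and \<Phi> :: "real \<Rightarrow> real^'n \<Rightarrow> complex"
    and \<omega>1 :: real
    and \<mu> :: "real \<Rightarrow> real"
  assumes dim: "CARD('n) = 3 \<or> CARD('n) = 4"
    and g_ass: "assumptions_g n g p1 p2 C1 C2 C3"
    and gs: "\<And>\<omega>. \<omega> > 0 \<Longrightarrow>
              ground_state n g \<omega> (\<Phi> \<omega>) \<and> weak_solution n g \<omega> (\<Phi> \<omega>) \<and>
              continuous_on UNIV (\<Phi> \<omega>) \<and>
              (\<forall>x. Im (\<Phi> \<omega> x) = 0 \<and> Re (\<Phi> \<omega> x) > 0) \<and>
              (\<forall>x y. norm x = norm y \<longrightarrow> \<Phi> \<omega> x = \<Phi> \<omega> y) \<and>
              (\<forall>x y. norm x < norm y \<longrightarrow> Re (\<Phi> \<omega> y) < Re (\<Phi> \<omega> x))"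
    and \<omega>1_pos: "\<omega>1 > 0"
    and \<mu>_pos: "\<And>\<omega>. \<omega> > \<omega>1 \<Longrightarrow> \<mu> \<omega> > 0"
    and \<mu>_lim: "(\<mu> \<longlongrightarrow> 1) at_top"
    and orth: "\<And>\<omega>. \<omega> > \<omega>1 \<Longrightarrow>
              rinner (\<lambda>x. zeta n \<Phi> \<mu> \<omega> x
                          + resolvent (s_par n \<Phi> \<mu> \<omega>) (\<lambda>y. of_real (Vpot n y) * zeta n \<Phi> \<mu> \<omega> y) x)
                     (\<lambda>x. complex_of_real (Vpot n x * LambdaW n x)) = 0"
    and grad_ex: "\<forall>\<^sub>F \<omega> in at_top. has_weak_grad (zeta n \<Phi> \<mu> \<omega>)"
    and grad_to0: "((\<lambda>\<omega>. grad_norm2_enn (zeta n \<Phi> \<mu> \<omega>)) \<longlongrightarrow> 0) at_top"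
    and Lr_to0: "\<And>r. dimR n / (dimR n - 2) < r \<Longrightarrow>
                   ((\<lambda>\<omega>. Lp_norm_pow r (zeta n \<Phi> \<mu> \<omega>)) \<longlongrightarrow> 0) at_top"
  shows "((\<lambda>\<omega>. kappa n g \<Phi> \<mu> \<omega> / (\<mu> \<omega> * peak (\<Phi> \<omega>)) powr p2) \<longlongrightarrow>
            - (C2 / p2) * rinner (\<lambda>x. complex_of_real (W n x powr p2))
                                 (\<lambda>x. complex_of_real (LambdaW n x))) at_top"
  proof -
  note A = g_ass[unfolded assumptions_g_def Let_def]
  define gr where "gr = g_real g"
  have dR: "dimR n = 3 \<or> dimR n = 4" using dim by (auto simp: dimR_def)
  have d2: "dimR n > 2" using dR by auto
  have gR: "\<And>t. t > 0 \<Longrightarrow> g (complex_of_real t) \<in> \<real>" using A by blast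
  have dif: "\<And>t. t > 0 \<Longrightarrow> gr differentiable (at t)" using A unfolding gr_def by blast
  have g0: "g 0 = 0" using A by blast
  have mon: "\<And>t. t > 0 \<Longrightarrow> deriv gr t * t - gr t \<ge> 0" using A unfolding gr_def by blast
  have p1a: "max (2 / (dimR n - 2)) 1 < p1" and p1b: "p1 < (dimR n + 2) / (dimR n - 2)"
    and p2a: "max ((dimR n + 2) / (dimR n - 2) - 2) p1 < p2" and p2b: "p2 < (dimR n + 2) / (dimR n - 2)"
    and C1: "C1 > 0" and C2: "C2 > 0" using A by blast+
  have lims: "Limsup (at_right 0) (\<lambda>t. ereal (\<bar>deriv gr t\<bar> / t powr (p1 - 1))) \<le> ereal C1"
    using A unfolding gr_def by blast
  have lim2: "((\<lambda>t. deriv gr t / t powr (p2 - 1)) \<longlongrightarrow> C2) at_top" using A unfolding gr_def by blast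
  have C3: "C3 > 0" using A by blast
  have cfact: "\<And>t. t \<ge> 0 \<Longrightarrow> integral {0..t} gr - gr t * t / crit_exp n \<ge> C3 * t powr (p2 + 1)"
    using A unfolding gr_def G_prim_def by blast
  have gval: "g (complex_of_real t) = complex_of_real (gr t)" if "t > 0" for t
  proof -
    have "Im (g (complex_of_real t)) = 0" using gR[OF that] by (simp add: complex_is_Real_iff)
    then show ?thesis by (simp add: gr_def g_real_def complex_eq_iff)
  qed
  have gr0: "gr 0 = 0" using g0 by (simp add: gr_def g_real_def)
  have p1: "p1 > 1" using p1a by simp
  have p12: "p1 < p2" using p2a by simp
  have cs: "crit_exp n > 2" using dR by (auto simp: crit_exp_def)
  have gpos: "\<And>t. t > 0 \<Longrightarrow> gr t > 0"
    by (rule gr_pos[OF dif mon gr0 lims p1 cfact C3 cs]) auto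
  have gasy: "((\<lambda>t. gr t / t powr p2) \<longlongrightarrow> C2 / p2) at_top"
  proof -
    have "p2 > 0" using p1 p12 by linarith
    note Y = gr_asymp[OF dif lim2 this]
    show ?thesis using Y by simp
  qed
  obtain C where C: "C > 0" "\<And>t. t > 0 \<Longrightarrow> gr t \<le> C * (t powr p1 + t powr p2)"
    using gr_bound[OF dif mon gpos lims gasy] p1 by auto
  have bnd: "\<bar>gr t\<bar> \<le> C * (t powr p1 + t powr p2)" if "t > 0" for t
    using C(2)[OF that] gpos[OF that] by simp
  have grc: "continuous_on {0<..} gr"
    using dif by (intro continuous_at_imp_continuous_on) (auto intro: differentiable_imp_continuous_within)
  have grm: "\<And>s t. 0 < s \<Longrightarrow> s \<le> t \<Longrightarrow> gr s / s \<le> gr t / t"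
    by (rule gr_ratio_mono[OF dif mon])
  have q: "(dimR n - 2) * (p1 + 1) > dimR n"
    using dR p1a by (auto simp: field_simps)
  have r4: "dimR n / (dimR n - 2) < 4" using dR by auto
  have gs': "\<And>\<omega>. \<omega> > 0 \<Longrightarrow> weak_solution n g \<omega> (\<Phi> \<omega>) \<and> continuous_on UNIV (\<Phi> \<omega>) \<and>
              (\<forall>x. Im (\<Phi> \<omega> x) = 0 \<and> Re (\<Phi> \<omega> x) > 0) \<and>
              (\<forall>x y. norm x < norm y \<longrightarrow> Re (\<Phi> \<omega> y) < Re (\<Phi> \<omega> x))"
    using gs by blast
  have lam: "filterlim (\<lambda>\<omega>. \<mu> \<omega> * peak (\<Phi> \<omega>)) at_top at_top"
    by (rule lam_to_infty[OF d2 gs' gval grc grm \<omega>1_pos \<mu>_pos \<mu>_lim Lr_to0[OF r4]])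
  define I where "I = (\<integral>x. W n x powr p2 * LambdaW n x \<partial>lborel)"
  have F_lim: "((\<lambda>l. \<integral>x. gr (l * W n x) / l powr p2 * LambdaW n x \<partial>lborel) \<longlongrightarrow> (C2 / p2) * I) at_top"
    unfolding I_def by (rule dct_limit[OF d2 grc bnd gasy _ _ q]) (use p1 p12 in auto)
  have comp: "((\<lambda>\<omega>. \<integral>x. gr (\<mu> \<omega> * peak (\<Phi> \<omega>) * W n x) / (\<mu> \<omega> * peak (\<Phi> \<omega>)) powr p2 * LambdaW n x \<partial>lborel)
               \<longlongrightarrow> (C2 / p2) * I) at_top"
    using filterlim_compose[OF F_lim lam] by simp
  have ev: "\<forall>\<^sub>F \<omega> in at_top. - (\<integral>x. gr (\<mu> \<omega> * peak (\<Phi> \<omega>) * W n x) / (\<mu> \<omega> * peak (\<Phi> \<omega>)) powr p2 * LambdaW n x \<partial>lborel)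
              = kappa n g \<Phi> \<mu> \<omega> / (\<mu> \<omega> * peak (\<Phi> \<omega>)) powr p2"
    using eventually_gt_at_top[of \<omega>1]
  proof eventually_elim
    case (elim \<omega>)
    have w0: "\<omega> > 0" using elim \<omega>1_pos by simp
    define l where "l = \<mu> \<omega> * peak (\<Phi> \<omega>)"
    have "Re (\<Phi> \<omega> 0) > 0" using gs[OF w0] by blast
    then have l: "l > 0" using \<mu>_pos[OF elim] by (simp add: l_def peak_def)
    have lw: "l * W n x > 0" for x using l W_pos[OF d2] by simp
    have "kappa n g \<Phi> \<mu> \<omega> = - rinner (\<lambda>x. complex_of_real (gr (l * W n x))) (\<lambda>x. complex_of_real (LambdaW n x))"
      unfolding kappa_def l_def[symmetric] using gval[OF lw] by simp
    also have "\<dots> = - (\<integral>x. gr (l * W n x) * LambdaW n x \<partial>lborel)" by (simp add: rinner_real)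
    finally have k: "kappa n g \<Phi> \<mu> \<omega> = - (\<integral>x. gr (l * W n x) * LambdaW n x \<partial>lborel)" .
    have "(\<integral>x. gr (l * W n x) / l powr p2 * LambdaW n x \<partial>lborel) = (\<integral>x. gr (l * W n x) * LambdaW n x / l powr p2 \<partial>lborel)"
      by (rule Bochner_Integration.integral_cong) auto
    also have "\<dots> = (\<integral>x. gr (l * W n x) * LambdaW n x \<partial>lborel) / l powr p2" by (rule integral_divide_zero)
    finally show ?case unfolding k l_def[symmetric] by simp
  qed
  have "((\<lambda>\<omega>. kappa n g \<Phi> \<mu> \<omega> / (\<mu> \<omega> * peak (\<Phi> \<omega>)) powr p2) \<longlongrightarrow> - ((C2 / p2) * I)) at_top"
    using tendsto_cong[OF ev] tendsto_minus[OF comp] by simp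
  moreover have "rinner (\<lambda>x. complex_of_real (W n x powr p2)) (\<lambda>x. complex_of_real (LambdaW n x)) = I"
    unfolding I_def by (rule rinner_real)
  ultimately show ?thesis by simp
qed

end
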